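(* Let $\Omega$ be a set, $n\ge1$, and let $H_1,\ldots,H_n,G$ be subgroups of $\mathrm{Sym}(\Omega)$ such that $(H_1,\ldots,H_n)$ is confined by $G$. Let $P$ be a confining subset for $(H_1,\ldots,H_n,G)$, let $r=|P|$, and assume that $\{\Omega_\sigma\}_{\sigma\in P}$ is a displacement configuration for $P$ such that for every $\sigma\in P$ the group $\mathrm{Rist}_G(\Omega_\sigma)$ is non-trivial and $\mathrm{FC}_{\leqslant nr}(\mathrm{Rist}_G(\Omega_\sigma))=\{1\}$. Then for every $\sigma\in P$ and $k\le n$ such that $D_{\sigma,k}$ has index at most $nr$ in $R$, there exists $\rho\in M_\sigma$ such that $H_k$ contains a non-trivial subgroup $N\le\mathrm{Rist}_G(\Omega_\rho)$ that is normalized by $D_{\sigma,k}$. Moreover, if $\mathrm{Rist}_G(\Omega_\rho)$ is finitely generated for all $\rho\in M_\sigma$, then one can find a finitely generated subgroup $L$ of $H_k$ that contains $N$.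
   Context: $\mathrm{Sym}(\Omega)$ is the group of permutations of $\Omega$. The $n$-tuple $(H_1,\ldots,H_n)$ is confined by $G$ if there is a finite set $P$ of non-trivial elements of $\mathrm{Sym}(\Omega)$ such that for every $g\in G$ there is $j$ with $gH_jg^{-1}\cap P\ne\varnothing$; $P$ is then a confining subset for $(H_1,\ldots,H_n,G)$. For $\Sigma\subset\Omega$, $\mathrm{Rist}_G(\Sigma)$ is the set of elements of $G$ fixing $\Omega\setminus\Sigma$ pointwise. $\mathrm{FC}_{\leqslant m}(K)$ denotes the set of elements of $K$ whose conjugacy class has at most $m$ elements. A collection $\{\Omega_\sigma\}_{\sigma\in P}$ of non-empty subsets of $\Omega$ is a displacement configuration for $P$ if: (C1) for all $\sigma,\rho\in P$, $\Omega_\sigma=\Omega_\rho$ or $\Omega_\sigma\cap\Omega_\rho=\varnothing$; (C3) for all $\sigma,\rho\in P$, either $\sigma$ fixes $\Omega_\rho$ pointwise or $\sigma(\Omega_\rho)\cap\bigcup_{\alpha\in P}\Omega_\alpha=\varnothing$; (C4) for all $\sigma\in P$, $\sigma(\Omega_\sigma)$ is disjoint from $\bigcup_{\alpha\in P}\Omega_\alpha$ and from $\bigcup_{\alpha\in P}\sigma^{-1}(\Omega_\alpha)$. Notation: $R$ is the subgroup of $G$ generated by the groups $\mathrm{Rist}_G(\Omega_\sigma)$, $\sigma\in P$. For $\sigma\in P$ and $k\le n$, $Y_{\sigma,k}=\{\gamma\in R:\gamma\sigma\gamma^{-1}\in H_k\}$ and $D_{\sigma,k}=\langle\gamma\delta^{-1}:\gamma,\delta\in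 Y_{\sigma,k}\rangle$. For $\sigma\in P$, $M_\sigma$ is the set of $\rho\in P$ such that $\sigma(\Omega_\rho)$ is disjoint from $\Omega_\alpha$ for all $\alpha\in P$. *)

theory Defs
  imports "HOL-Algebra.Algebra"
begin

text \<open>Sym(Omega): the group of all permutations of the type 'a (Omega = UNIV).\<close>
abbreviation Sym :: "('a \<Rightarrow> 'a) monoid" where
  "Sym \<equiv> BijGroup (UNIV :: 'a set)"

definition conjg :: "('a \<Rightarrow> 'a) \<Rightarrow> ('a \<Rightarrow> 'a) set \<Rightarrow> ('a \<Rightarrow> 'a) set" where
  "conjg g H = {g \<otimes>\<^bsub>Sym\<^esub> h \<otimes>\<^bsub>Sym\<^esub> inv\<^bsub>Sym\<^esub> g | h. h \<in> H}"

definition confining_subset ::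
  "nat \<Rightarrow> (nat \<Rightarrow> ('a \<Rightarrow> 'a) set) \<Rightarrow> ('a \<Rightarrow> 'a) set \<Rightarrow> ('a \<Rightarrow> 'a) set \<Rightarrow> bool" where
  "confining_subset n H G P \<longleftrightarrow>
     finite P \<and> P \<subseteq> carrier Sym \<and> \<one>\<^bsub>Sym\<^esub> \<notin> P \<and>
     (\<forall>g \<in> G. \<exists>j \<in> {1..n}. conjg g (H j) \<inter> P \<noteq> {})"

definition confined_by ::
  "nat \<Rightarrow> (nat \<Rightarrow> ('a \<Rightarrow> 'a) set) \<Rightarrow> ('a \<Rightarrow> 'a) set \<Rightarrow> bool" where
  "confined_by n H G \<longleftrightarrow> (\<exists>P. confining_subset n H G P)"

definition Rist :: "('a \<Rightarrow> 'a) set \<Rightarrow> 'a set \<Rightarrow> ('a \<Rightarrow> 'a) set" where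
  "Rist G \<Sigma> = {g \<in> G. \<forall>x. x \<notin> \<Sigma> \<longrightarrow> g x = x}"

definition conj_class :: "('a \<Rightarrow> 'a) set \<Rightarrow> ('a \<Rightarrow> 'a) \<Rightarrow> ('a \<Rightarrow> 'a) set" where
  "conj_class K x = {k \<otimes>\<^bsub>Sym\<^esub> x \<otimes>\<^bsub>Sym\<^esub> inv\<^bsub>Sym\<^esub> k | k. k \<in> K}"

definition FC_le :: "nat \<Rightarrow> ('a \<Rightarrow> 'a) set \<Rightarrow> ('a \<Rightarrow> 'a) set" where
  "FC_le m K = {x \<in> K. finite (conj_class K x) \<and> card (conj_class K x) \<le> m}"

text \<open>Displacement configuration (conditions C1, C3, C4) for P.\<close>
definition displacement_configuration ::
  "('a \<Rightarrow> 'a) set \<Rightarrow> (('a \<Rightarrow> 'a) \<Rightarrow> 'a set) \<Rightarrow> bool" where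
  "displacement_configuration P Om \<longleftrightarrow>
     (\<forall>\<sigma> \<in> P. Om \<sigma> \<noteq> {}) \<and>
     (\<forall>\<sigma> \<in> P. \<forall>\<rho> \<in> P. Om \<sigma> = Om \<rho> \<or> Om \<sigma> \<inter> Om \<rho> = {}) \<and>
     (\<forall>\<sigma> \<in> P. \<forall>\<rho> \<in> P. (\<forall>x \<in> Om \<rho>. \<sigma> x = x) \<or>
                         \<sigma> ` Om \<rho> \<inter> (\<Union>\<alpha> \<in> P. Om \<alpha>) = {}) \<and>
     (\<forall>\<sigma> \<in> P. \<sigma> ` Om \<sigma> \<inter> (\<Union>\<alpha> \<in> P. Om \<alpha>) = {} \<and>
               \<sigma> ` Om \<sigma> \<inter> (\<Union>\<alpha> \<in> P. (inv\<^bsub>Sym\<^esub> \<sigma>) ` Om \<alpha>) = {})"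

definition Rgrp :: "('a \<Rightarrow> 'a) set \<Rightarrow> ('a \<Rightarrow> 'a) set \<Rightarrow> (('a \<Rightarrow> 'a) \<Rightarrow> 'a set) \<Rightarrow> ('a \<Rightarrow> 'a) set" where
  "Rgrp G P Om = generate Sym (\<Union>\<sigma> \<in> P. Rist G (Om \<sigma>))"

definition Yset :: "('a \<Rightarrow> 'a) set \<Rightarrow> ('a \<Rightarrow> 'a) \<Rightarrow> ('a \<Rightarrow> 'a) set \<Rightarrow> ('a \<Rightarrow> 'a) set" where
  "Yset R \<sigma> Hk = {\<gamma> \<in> R. \<gamma> \<otimes>\<^bsub>Sym\<^esub> \<sigma> \<otimes>\<^bsub>Sym\<^esub> inv\<^bsub>Sym\<^esub> \<gamma> \<in> Hk}"

definition Dgrp :: "('a \<Rightarrow> 'a) set \<Rightarrow> ('a \<Rightarrow> 'a) \<Rightarrow> ('a \<Rightarrow> 'a) set \<Rightarrow> ('a \<Rightarrow> 'a) set" where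
  "Dgrp R \<sigma> Hk = generate Sym {\<gamma> \<otimes>\<^bsub>Sym\<^esub> inv\<^bsub>Sym\<^esub> \<delta> | \<gamma> \<delta>. \<gamma> \<in> Yset R \<sigma> Hk \<and> \<delta> \<in> Yset R \<sigma> Hk}"

definition Mset :: "('a \<Rightarrow> 'a) set \<Rightarrow> (('a \<Rightarrow> 'a) \<Rightarrow> 'a set) \<Rightarrow> ('a \<Rightarrow> 'a) \<Rightarrow> ('a \<Rightarrow> 'a) set" where
  "Mset P Om \<sigma> = {\<rho> \<in> P. \<forall>\<alpha> \<in> P. \<sigma> ` Om \<rho> \<inter> Om \<alpha> = {}}"

definition index_le :: "('a \<Rightarrow> 'a) set \<Rightarrow> ('a \<Rightarrow> 'a) set \<Rightarrow> nat \<Rightarrow> bool" where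
  "index_le D R m \<longleftrightarrow> finite {D #>\<^bsub>Sym\<^esub> g | g. g \<in> R} \<and> card {D #>\<^bsub>Sym\<^esub> g | g. g \<in> R} \<le> m"

definition normalizes :: "('a \<Rightarrow> 'a) set \<Rightarrow> ('a \<Rightarrow> 'a) set \<Rightarrow> bool" where
  "normalizes D N \<longleftrightarrow> (\<forall>d \<in> D. conjg d N = N)"

definition fin_gen :: "('a \<Rightarrow> 'a) set \<Rightarrow> bool" where
  "fin_gen L \<longleftrightarrow> (\<exists>F. finite F \<and> F \<subseteq> carrier Sym \<and> generate Sym F = L)"

end

theory Submission
  imports Defs
begin


abbreviation iv :: "('a \<Rightarrow> 'a) \<Rightarrow> 'a \<Rightarrow> 'a" where "iv f \<equiv> inv_into UNIV f"

lemma Sym_carrier: "carrier Sym = {f. bij f}"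
  by (auto simp: BijGroup_def Bij_def extensional_def)

lemma Sym_mult: "bij f \<Longrightarrow> bij g \<Longrightarrow> f \<otimes>\<^bsub>Sym\<^esub> g = f \<circ> g"
  by (auto simp: BijGroup_def Bij_def extensional_def compose_def restrict_def fun_eq_iff)

lemma Sym_one: "\<one>\<^bsub>Sym\<^esub> = id"
  by (auto simp: BijGroup_def fun_eq_iff)

lemma Sym_inv: "bij f \<Longrightarrow> inv\<^bsub>Sym\<^esub> f = iv f"
  apply (subst inv_BijGroup)
   apply (auto simp: Bij_def extensional_def fun_eq_iff)
  done

lemma Sym_group: "group Sym" by (rule group_BijGroup)

lemma bij_iv[simp]: "bij f \<Longrightarrow> bij (iv f)"
  by (simp add: bij_imp_bij_inv)
lemma iv_ap1[simp]: "bij f \<Longrightarrow> f (iv f x) = x"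
  by (simp add: bij_is_surj surj_f_inv_f)
lemma iv_ap2[simp]: "bij f \<Longrightarrow> iv f (f x) = x"
  by (simp add: bij_is_inj)
lemma iv_c1[simp]: "bij f \<Longrightarrow> f \<circ> iv f = id"
  by (simp add: fun_eq_iff)
lemma iv_c2[simp]: "bij f \<Longrightarrow> iv f \<circ> f = id"
  by (simp add: fun_eq_iff)
lemma iv_c1'[simp]: "bij f \<Longrightarrow> f \<circ> (iv f \<circ> g) = g"
  by (simp add: fun_eq_iff)
lemma iv_c2'[simp]: "bij f \<Longrightarrow> iv f \<circ> (f \<circ> g) = g"
  by (simp add: fun_eq_iff)
lemma iv_comp: "bij f \<Longrightarrow> bij g \<Longrightarrow> iv (f \<circ> g) = iv g \<circ> iv f"
  by (simp add: o_inv_distrib)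
lemma iv_iv[simp]: "bij f \<Longrightarrow> iv (iv f) = f"
  by (simp add: inv_inv_eq)
lemma iv_id[simp]: "iv id = id"
  by (metis bij_id iv_c2 comp_id)

lemma bij_comp'[simp]: "bij f \<Longrightarrow> bij g \<Longrightarrow> bij (f \<circ> g)"
  by (simp add: bij_comp)

lemma iv_unique: fixes f g :: "'a \<Rightarrow> 'a" assumes "bij f" "f \<circ> g = id" shows "iv f = g"
proof -
  have "iv f = iv f \<circ> (f \<circ> g)" using assms by simp
  also have "... = g" using assms(1) by simp
  finally show ?thesis .
qed

lemma bij_eqI: fixes f g h :: "'a \<Rightarrow> 'a" assumes "bij f" "f \<circ> g = f \<circ> h" shows "g = h"
proof -
  have "iv f \<circ> (f \<circ> g) = iv f \<circ> (f \<circ> h)" using assms by simp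
  then show ?thesis using assms(1) by simp
qed

section \<open>Supports\<close>

definition fixout :: "('a \<Rightarrow> 'a) \<Rightarrow> 'a set \<Rightarrow> bool" where
  "fixout g A \<longleftrightarrow> (\<forall>x. x \<notin> A \<longrightarrow> g x = x)"

definition pres :: "('a \<Rightarrow> 'a) \<Rightarrow> 'a set \<Rightarrow> bool" where
  "pres g A \<longleftrightarrow> (\<forall>x. (g x \<in> A) = (x \<in> A))"

lemma fixoutD: "fixout g A \<Longrightarrow> x \<notin> A \<Longrightarrow> g x = x"
  by (simp add: fixout_def)

lemma fixout_pres: assumes "bij g" "fixout g A" shows "pres g A"
  unfolding pres_def
proof
  fix x
  show "(g x \<in> A) = (x \<in> A)"
  proof (cases "x \<in> A")
    case True
    show ?thesis
    proof (rule ccontr)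
      assume "(g x \<in> A) \<noteq> (x \<in> A)"
      then have "g x \<notin> A" using True by simp
      then have "g (g x) = g x" using assms(2) by (simp add: fixout_def)
      then have "g x = x" using assms(1) by (meson bij_is_inj injD)
      then show False using True \<open>g x \<notin> A\<close> by simp
    qed
  next
    case False
    then show ?thesis using assms(2) by (simp add: fixout_def)
  qed
qed

lemma presD: "pres g A \<Longrightarrow> (g x \<in> A) = (x \<in> A)"
  by (simp add: pres_def)

lemma pres_iv: assumes "bij g" "pres g A" shows "pres (iv g) A"
  unfolding pres_def
proof
  fix x
  have "(g (iv g x) \<in> A) = (iv g x \<in> A)" using assms(2) by (simp add: pres_def)
  then show "(iv g x \<in> A) = (x \<in> A)" using assms(1) by simp
qed

lemma pres_comp: "pres f A \<Longrightarrow> pres g A \<Longrightarrow> pres (f \<circ> g) A"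
  by (simp add: pres_def)

lemma pres_id: "pres id A" by (simp add: pres_def)

lemma fixout_iv: assumes "bij g" "fixout g A" shows "fixout (iv g) A"
  unfolding fixout_def
proof (intro allI impI)
  fix x assume "x \<notin> A"
  then have "g x = x" using assms(2) by (simp add: fixout_def)
  then have "iv g (g x) = iv g x" by simp
  then show "iv g x = x" using assms(1) by simp
qed

lemma fixout_comp: "fixout f A \<Longrightarrow> fixout g A \<Longrightarrow> fixout (f \<circ> g) A"
  by (simp add: fixout_def)

lemma fixout_id: "fixout id A" by (simp add: fixout_def)

lemma fixout_mono: "fixout g A \<Longrightarrow> A \<subseteq> B \<Longrightarrow> fixout g B"
  by (auto simp add: fixout_def)

lemma fixout_conj: assumes "bij h" "fixout g A" shows "fixout (h \<circ> g \<circ> iv h) (h ` A)"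
  unfolding fixout_def
proof (intro allI impI)
  fix x assume "x \<notin> h ` A"
  then have "iv h x \<notin> A" using assms(1) iv_ap1[of h x] by (metis image_eqI)
  then have "g (iv h x) = iv h x" using assms(2) by (simp add: fixout_def)
  then show "(h \<circ> g \<circ> iv h) x = x" using assms(1) by simp
qed

lemma fixout_commute:
  assumes "bij a" "bij b" "fixout a A" "fixout b B" "A \<inter> B = {}"
  shows "a \<circ> b = b \<circ> a"
proof
  fix x
  have pa: "pres a A" using assms(1,3) by (rule fixout_pres)
  have pb: "pres b B" using assms(2,4) by (rule fixout_pres)
  show "(a \<circ> b) x = (b \<circ> a) x"
  proof (cases "x \<in> A")
    case True
    then have "x \<notin> B" using assms(5) by blast
    moreover have "a x \<in> A" using True pa by (simp add: pres_def)
    then have "a x \<notin> B" using assms(5) by blast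
    ultimately show ?thesis using assms(4) by (simp add: fixout_def)
  next
    case False
    then have ax: "a x = x" using assms(3) by (simp add: fixout_def)
    show ?thesis
    proof (cases "x \<in> B")
      case True
      then have "b x \<in> B" using pb by (simp add: pres_def)
      then have "b x \<notin> A" using assms(5) by blast
      then show ?thesis using ax assms(3) by (simp add: fixout_def)
    next
      case False
      then show ?thesis using ax assms(4) by (simp add: fixout_def)
    qed
  qed
qed

lemma pres_image: "g ` A = A" if "bij g" "pres g A"
proof
  show "g ` A \<subseteq> A" using that by (auto simp: pres_def)
  show "A \<subseteq> g ` A"
  proof
    fix y assume "y \<in> A"
    then have "g (iv g y) \<in> A" using that by simp
    then have "iv g y \<in> A" using that presD[of g A "iv g y"] by simp
    moreover have "y = g (iv g y)" using that by simp
    ultimately show "y \<in> g ` A" by blast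
  qed
qed

section \<open>Restrictions\<close>

definition restr :: "('a \<Rightarrow> 'a) \<Rightarrow> 'a set \<Rightarrow> 'a \<Rightarrow> 'a" where
  "restr g A = (\<lambda>x. if x \<in> A then g x else x)"

lemma restr_fixout: "fixout (restr g A) A"
  by (simp add: fixout_def restr_def)

lemma restr_comp: "pres h A \<Longrightarrow> restr (g \<circ> h) A = restr g A \<circ> restr h A"
  by (auto simp: restr_def pres_def fun_eq_iff)

lemma restr_id: "restr id A = id"
  by (simp add: restr_def fun_eq_iff)

lemma restr_of_fixout: "fixout g A \<Longrightarrow> restr g A = g"
  by (auto simp: restr_def fixout_def fun_eq_iff)

lemma restr_restr: "B \<subseteq> A \<Longrightarrow> restr (restr g A) B = restr g B"
  by (auto simp: restr_def fun_eq_iff)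

lemma restr_decomp: "pres g A \<Longrightarrow> g = restr g A \<circ> restr g (-A)"
  by (auto simp: restr_def pres_def fun_eq_iff)

lemma restr_inv_comp: assumes "bij g" "pres g A"
  shows "restr g A \<circ> restr (iv g) A = id" "restr (iv g) A \<circ> restr g A = id"
proof -
  have pi: "pres (iv g) A" using assms by (rule pres_iv)
  show "restr g A \<circ> restr (iv g) A = id"
  proof
    fix x show "(restr g A \<circ> restr (iv g) A) x = id x"
      using presD[OF pi, of x] assms(1) by (simp add: restr_def)
  qed
  show "restr (iv g) A \<circ> restr g A = id"
  proof
    fix x show "(restr (iv g) A \<circ> restr g A) x = id x"
      using presD[OF assms(2), of x] assms(1) by (simp add: restr_def)
  qed
qed

lemma restr_bij: assumes "bij g" "pres g A" shows "bij (restr g A)"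
  using restr_inv_comp[OF assms] o_bij by blast

lemma restr_iv: assumes "bij g" "pres g A" shows "iv (restr g A) = restr (iv g) A"
  using restr_inv_comp[OF assms] iv_unique restr_bij[OF assms] by blast

lemma restr_pres: "pres g A \<Longrightarrow> pres g B \<Longrightarrow> pres (restr g A) B"
  by (auto simp: restr_def pres_def)




section \<open>Concrete subgroups of Sym\<close>

lemma sub_bij: assumes "subgroup K Sym" "x \<in> K" shows "bij x"
proof -
  have "x \<in> carrier Sym" using subgroup.subset[OF assms(1)] assms(2) by blast
  then show ?thesis unfolding Sym_carrier by simp
qed

lemma sub_comp: assumes "subgroup K Sym" "x \<in> K" "y \<in> K" shows "x \<circ> y \<in> K"
proof -
  have "x \<otimes>\<^bsub>Sym\<^esub> y \<in> K" using subgroup.m_closed[OF assms(1) assms(2,3)] .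
  then show ?thesis unfolding Sym_mult[OF sub_bij[OF assms(1,2)] sub_bij[OF assms(1,3)]] .
qed

lemma sub_iv: assumes "subgroup K Sym" "x \<in> K" shows "iv x \<in> K"
proof -
  have "inv\<^bsub>Sym\<^esub> x \<in> K" using subgroup.m_inv_closed[OF assms] .
  then show ?thesis unfolding Sym_inv[OF sub_bij[OF assms]] .
qed

lemma sub_id: assumes "subgroup K Sym" shows "id \<in> K"
  using subgroup.one_closed[OF assms] unfolding Sym_one .

lemma sub_I: assumes "\<And>x. x \<in> K \<Longrightarrow> bij x" "id \<in> K"
  "\<And>x y. x \<in> K \<Longrightarrow> y \<in> K \<Longrightarrow> x \<circ> y \<in> K" "\<And>x. x \<in> K \<Longrightarrow> iv x \<in> K"
  shows "subgroup K Sym"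
proof
  show "K \<subseteq> carrier Sym" using assms(1) unfolding Sym_carrier by blast
  show "x \<otimes>\<^bsub>Sym\<^esub> y \<in> K" if "x \<in> K" "y \<in> K" for x y
    unfolding Sym_mult[OF assms(1)[OF that(1)] assms(1)[OF that(2)]] using assms(3) that .
  show "\<one>\<^bsub>Sym\<^esub> \<in> K" unfolding Sym_one by (rule assms(2))
  show "inv\<^bsub>Sym\<^esub> x \<in> K" if "x \<in> K" for x
    unfolding Sym_inv[OF assms(1)[OF that]] using assms(4) that .
qed

lemma gen_sub: assumes "\<And>x. x \<in> Gs \<Longrightarrow> bij x" shows "subgroup (generate Sym Gs) Sym"
proof -
  have "Gs \<subseteq> carrier Sym" using assms unfolding Sym_carrier by blast
  then show ?thesis by (rule group.generate_is_subgroup[OF Sym_group])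
qed

lemma gen_incl: "x \<in> Gs \<Longrightarrow> x \<in> generate Sym Gs"
  by (rule generate.incl)

lemma gen_min: assumes "subgroup K Sym" "Gs \<subseteq> K" shows "generate Sym Gs \<subseteq> K"
  by (rule group.generate_subgroup_incl[OF Sym_group assms(2,1)])

lemma gen_induct[consumes 2, case_names one incl inv comp]:
  assumes "x \<in> generate Sym Gs" "\<And>x. x \<in> Gs \<Longrightarrow> bij x"
    and "P id" "\<And>h. h \<in> Gs \<Longrightarrow> P h" "\<And>h. h \<in> Gs \<Longrightarrow> P (iv h)"
    "\<And>a b. a \<in> generate Sym Gs \<Longrightarrow> b \<in> generate Sym Gs \<Longrightarrow> P a \<Longrightarrow> P b \<Longrightarrow> P (a \<circ> b)"
  shows "P x"
  using assms(1)
proof (induction rule: generate.induct)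
  case one then show ?case using assms(3) unfolding Sym_one .
next
  case (incl h) then show ?case using assms(4) by blast
next
  case (inv h)
  have "inv\<^bsub>Sym\<^esub> h = iv h" using Sym_inv[OF assms(2)[OF inv]] .
  then show ?case using assms(5)[OF inv] by simp
next
  case (eng h1 h2)
  have b1: "bij h1" using sub_bij[OF gen_sub[OF assms(2)] eng.hyps(1)] .
  have b2: "bij h2" using sub_bij[OF gen_sub[OF assms(2)] eng.hyps(2)] .
  show ?case unfolding Sym_mult[OF b1 b2] using assms(6)[OF eng.hyps(1,2) eng.IH] .
qed

lemma gen_bij: "x \<in> generate Sym Gs \<Longrightarrow> (\<And>x. x \<in> Gs \<Longrightarrow> bij x) \<Longrightarrow> bij x"
  using gen_sub sub_bij by metis

lemma gen_conj_sub:
  assumes "bij d" "\<And>x. x \<in> Gs \<Longrightarrow> bij x" "h \<in> generate Sym Gs"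
  shows "d \<circ> h \<circ> iv d \<in> generate Sym {d \<circ> x \<circ> iv d | x. x \<in> Gs}"
proof -
  let ?Y = "{d \<circ> x \<circ> iv d | x. x \<in> Gs}"
  have Yb: "\<And>y. y \<in> ?Y \<Longrightarrow> bij y" using assms by auto
  have S: "subgroup (generate Sym ?Y) Sym" by (rule gen_sub[OF Yb])
  show ?thesis
  proof (rule gen_induct[OF assms(3) assms(2), where P = "\<lambda>h. d \<circ> h \<circ> iv d \<in> generate Sym ?Y"])
    show "d \<circ> id \<circ> iv d \<in> generate Sym ?Y" using assms(1) sub_id[OF S] by simp
  next
    fix h assume "h \<in> Gs" then show "d \<circ> h \<circ> iv d \<in> generate Sym ?Y" by (intro gen_incl) blast
  next
    fix h assume h: "h \<in> Gs"
    have "d \<circ> h \<circ> iv d \<in> generate Sym ?Y" using h by (intro gen_incl) blast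
    then have "iv (d \<circ> h \<circ> iv d) \<in> generate Sym ?Y" using sub_iv[OF S] by blast
    moreover have "iv (d \<circ> h \<circ> iv d) = d \<circ> iv h \<circ> iv d"
      using assms(1) assms(2)[OF h] by (simp add: iv_comp comp_assoc)
    ultimately show "d \<circ> iv h \<circ> iv d \<in> generate Sym ?Y" by simp
  next
    fix a b assume "d \<circ> a \<circ> iv d \<in> generate Sym ?Y" "d \<circ> b \<circ> iv d \<in> generate Sym ?Y"
    then have "(d \<circ> a \<circ> iv d) \<circ> (d \<circ> b \<circ> iv d) \<in> generate Sym ?Y"
      using sub_comp[OF S] by blast
    moreover have "(d \<circ> a \<circ> iv d) \<circ> (d \<circ> b \<circ> iv d) = d \<circ> (a \<circ> b) \<circ> iv d"
      using assms(1) by (simp add: comp_assoc)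
    ultimately show "d \<circ> (a \<circ> b) \<circ> iv d \<in> generate Sym ?Y" by simp
  qed
qed

lemma gen_conj:
  assumes "bij d" "\<And>x. x \<in> Gs \<Longrightarrow> bij x"
  shows "{d \<circ> h \<circ> iv d | h. h \<in> generate Sym Gs} = generate Sym {d \<circ> x \<circ> iv d | x. x \<in> Gs}"
proof
  show "{d \<circ> h \<circ> iv d | h. h \<in> generate Sym Gs} \<subseteq> generate Sym {d \<circ> x \<circ> iv d | x. x \<in> Gs}"
    using gen_conj_sub[OF assms] by blast
next
  let ?Y = "{d \<circ> x \<circ> iv d | x. x \<in> Gs}"
  have Yb: "\<And>y. y \<in> ?Y \<Longrightarrow> bij y" using assms by auto
  have eq: "{iv d \<circ> y \<circ> iv (iv d) | y. y \<in> ?Y} = Gs"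
  proof (intro Set.set_eqI iffI)
    fix z assume "z \<in> {iv d \<circ> y \<circ> iv (iv d) | y. y \<in> ?Y}"
    then obtain x where "x \<in> Gs" "z = iv d \<circ> (d \<circ> x \<circ> iv d) \<circ> iv (iv d)" by blast
    moreover have "iv d \<circ> (d \<circ> x \<circ> iv d) \<circ> iv (iv d) = x" using assms(1) by (simp add: comp_assoc)
    ultimately show "z \<in> Gs" by simp
  next
    fix z assume z: "z \<in> Gs"
    have "iv d \<circ> (d \<circ> z \<circ> iv d) \<circ> iv (iv d) = z" using assms(1) by (simp add: comp_assoc)
    have "d \<circ> z \<circ> iv d \<in> ?Y" using z by blast
    then show "z \<in> {iv d \<circ> y \<circ> iv (iv d) | y. y \<in> ?Y}"
      using \<open>iv d \<circ> (d \<circ> z \<circ> iv d) \<circ> iv (iv d) = z\<close> by force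
  qed
  show "generate Sym ?Y \<subseteq> {d \<circ> h \<circ> iv d | h. h \<in> generate Sym Gs}"
  proof
    fix y assume "y \<in> generate Sym ?Y"
    then have "iv d \<circ> y \<circ> iv (iv d) \<in> generate Sym Gs"
      using gen_conj_sub[of "iv d" ?Y y] assms(1) Yb eq by simp
    moreover have "y = d \<circ> (iv d \<circ> y \<circ> iv (iv d)) \<circ> iv d" using assms(1) by (simp add: comp_assoc)
    ultimately show "y \<in> {d \<circ> h \<circ> iv d | h. h \<in> generate Sym Gs}" by blast
  qed
qed

section \<open>Cosets\<close>

definition rc :: "('a \<Rightarrow> 'a) set \<Rightarrow> ('a \<Rightarrow> 'a) \<Rightarrow> ('a \<Rightarrow> 'a) set" where
  "rc K g = (\<lambda>h. h \<circ> g) ` K"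

lemma rc_Sym: assumes "\<And>x. x \<in> K \<Longrightarrow> bij x" "bij g" shows "K #>\<^bsub>Sym\<^esub> g = rc K g"
  using assms by (auto simp: r_coset_def rc_def Sym_mult)

lemma rc_self: assumes "subgroup K Sym" shows "g \<in> rc K g"
proof -
  have "id \<circ> g \<in> rc K g" unfolding rc_def using sub_id[OF assms] by (rule imageI)
  then show ?thesis by simp
qed

lemma rc_eqD: assumes "subgroup K Sym" "bij g" "bij g'" "rc K g = rc K g'" shows "g \<circ> iv g' \<in> K"
proof -
  have "g \<in> rc K g'" using assms rc_self by metis
  then obtain h where "h \<in> K" "g = h \<circ> g'" by (auto simp: rc_def)
  then show ?thesis using assms(3) by (simp add: comp_assoc)
qed

lemma rc_eqI: assumes "subgroup K Sym" "h \<in> K" shows "rc K (h \<circ> g) = rc K g"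
proof
  show "rc K (h \<circ> g) \<subseteq> rc K g"
    using assms sub_comp by (auto simp: rc_def comp_assoc[symmetric])
  show "rc K g \<subseteq> rc K (h \<circ> g)"
  proof
    fix x assume "x \<in> rc K g"
    then obtain k where k: "k \<in> K" "x = k \<circ> g" by (auto simp: rc_def)
    have hb: "bij h" using assms sub_bij by blast
    have "k \<circ> iv h \<in> K" using assms k sub_comp sub_iv by blast
    moreover have "x = (k \<circ> iv h) \<circ> (h \<circ> g)" using k hb by (simp add: comp_assoc)
    ultimately show "x \<in> rc K (h \<circ> g)" by (auto simp: rc_def)
  qed
qed

lemma rc_comp: "rc K (g \<circ> f) = (\<lambda>x. x \<circ> f) ` rc K g"
  by (auto simp: rc_def comp_assoc image_image)

lemma rc_sub: assumes "subgroup K Sym" "k \<in> K" shows "rc K k = K"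
proof -
  have "rc K (k \<circ> id) = rc K id" using rc_eqI assms by blast
  moreover have "rc K id = K" by (auto simp: rc_def)
  ultimately show ?thesis by simp
qed




lemma rc_id: "rc K id = K" by (simp add: rc_def)

lemma schreier:
  fixes F :: "('a \<Rightarrow> 'a) set" and K :: "('a \<Rightarrow> 'a) set"
  assumes finF: "finite F" and bF: "\<And>x. x \<in> F \<Longrightarrow> bij x"
    and sK: "subgroup K Sym" and KA: "K \<subseteq> generate Sym F"
    and fin: "finite {rc K g | g. g \<in> generate Sym F}"
  shows "\<exists>F'. finite F' \<and> (\<forall>x\<in>F'. bij x) \<and> generate Sym F' = K"
proof -
  let ?A = "generate Sym F"
  have sA: "subgroup ?A Sym" by (rule gen_sub[OF bF])
  define rep where "rep C = (if C = K then id else (SOME t. t \<in> ?A \<and> rc K t = C))" for C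
  define rp where "rp x = rep (rc K x)" for x
  have rpA: "rp x \<in> ?A \<and> rc K (rp x) = rc K x" if "x \<in> ?A" for x
  proof (cases "rc K x = K")
    case True
    then show ?thesis using sub_id[OF sA] rc_id[of K] by (simp add: rp_def rep_def)
  next
    case False
    have "\<exists>t. t \<in> ?A \<and> rc K t = rc K x" using that by blast
    then have "(SOME t. t \<in> ?A \<and> rc K t = rc K x) \<in> ?A \<and> rc K (SOME t. t \<in> ?A \<and> rc K t = rc K x) = rc K x"
      by (rule someI_ex)
    then show ?thesis using False by (simp add: rp_def rep_def)
  qed
  have rp_cong: "rc K x = rc K y \<Longrightarrow> rp x = rp y" for x y by (simp add: rp_def)
  define T where "T = rp ` ?A"
  have finT: "finite T"
  proof -
    have "T = rep ` {rc K g | g. g \<in> ?A}" by (auto simp: T_def rp_def)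
    then show ?thesis using fin by simp
  qed
  have TA: "t \<in> ?A" if "t \<in> T" for t using that rpA by (auto simp: T_def)
  have rpT: "rp t \<in> T" if "t \<in> ?A" for t using that by (simp add: T_def)
  have rpt: "rp t = t" if tT: "t \<in> T" for t
  proof -
    obtain x where x: "x \<in> ?A" "t = rp x" using tT unfolding T_def by blast
    then have "rc K t = rc K x" using rpA by blast
    then have "rp t = rp x" by (rule rp_cong)
    with x(2) show ?thesis by simp
  qed
  have bA: "bij x" if "x \<in> ?A" for x using sub_bij[OF sA that] .
  have inK: "x \<circ> iv (rp x) \<in> K" if "x \<in> ?A" for x
    using rc_eqD[OF sK bA[OF that] bA[OF conjunct1[OF rpA[OF that]]]] rpA[OF that] by simp
  define S where "S = (\<lambda>(t, f). t \<circ> f \<circ> iv (rp (t \<circ> f))) ` (T \<times> (F \<union> iv ` F))"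
  have finS: "finite S" unfolding S_def using finT finF by simp
  have FA: "f \<in> ?A" if "f \<in> F \<union> iv ` F" for f
    using that gen_incl[of _ F] sub_iv[OF sA] by blast
  have SK: "S \<subseteq> K"
  proof
    fix s assume "s \<in> S"
    then obtain t f where tf: "t \<in> T" "f \<in> F \<union> iv ` F" "s = t \<circ> f \<circ> iv (rp (t \<circ> f))"
      by (auto simp: S_def)
    have "t \<circ> f \<in> ?A" using sub_comp[OF sA TA[OF tf(1)] FA[OF tf(2)]] .
    then show "s \<in> K" using inK tf(3) by simp
  qed
  have bS: "bij s" if "s \<in> S" for s using SK that sub_bij[OF sK] by blast
  have sS: "subgroup (generate Sym S) Sym" by (rule gen_sub[OF bS])
  have claim: "\<forall>t\<in>T. t \<circ> a \<circ> iv (rp (t \<circ> a)) \<in> generate Sym S" if "a \<in> ?A" for a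
  proof (rule gen_induct[OF that bF, where P = "\<lambda>a. \<forall>t\<in>T. t \<circ> a \<circ> iv (rp (t \<circ> a)) \<in> generate Sym S"])
    show "\<forall>t\<in>T. t \<circ> id \<circ> iv (rp (t \<circ> id)) \<in> generate Sym S"
    proof
      fix t assume "t \<in> T"
      then have "t \<circ> id \<circ> iv (rp (t \<circ> id)) = id" using rpt bA[OF TA] by simp
      then show "t \<circ> id \<circ> iv (rp (t \<circ> id)) \<in> generate Sym S" using sub_id[OF sS] by simp
    qed
  next
    fix h assume h: "h \<in> F"
    show "\<forall>t\<in>T. t \<circ> h \<circ> iv (rp (t \<circ> h)) \<in> generate Sym S"
    proof
      fix t assume "t \<in> T"
      then have "t \<circ> h \<circ> iv (rp (t \<circ> h)) \<in> S" using h unfolding S_def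
        by (intro image_eqI[where x="(t,h)"]) auto
      then show "t \<circ> h \<circ> iv (rp (t \<circ> h)) \<in> generate Sym S" by (rule gen_incl)
    qed
  next
    fix h assume h: "h \<in> F"
    show "\<forall>t\<in>T. t \<circ> iv h \<circ> iv (rp (t \<circ> iv h)) \<in> generate Sym S"
    proof
      fix t assume "t \<in> T"
      then have "t \<circ> iv h \<circ> iv (rp (t \<circ> iv h)) \<in> S" using h unfolding S_def
        by (intro image_eqI[where x="(t,iv h)"]) auto
      then show "t \<circ> iv h \<circ> iv (rp (t \<circ> iv h)) \<in> generate Sym S" by (rule gen_incl)
    qed
  next
    fix a b assume a: "a \<in> ?A" and b: "b \<in> ?A"
      and IHa: "\<forall>t\<in>T. t \<circ> a \<circ> iv (rp (t \<circ> a)) \<in> generate Sym S"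
      and IHb: "\<forall>t\<in>T. t \<circ> b \<circ> iv (rp (t \<circ> b)) \<in> generate Sym S"
    show "\<forall>t\<in>T. t \<circ> (a \<circ> b) \<circ> iv (rp (t \<circ> (a \<circ> b))) \<in> generate Sym S"
    proof
      fix t assume t: "t \<in> T"
      have ta: "t \<circ> a \<in> ?A" using sub_comp[OF sA TA[OF t] a] .
      let ?u = "rp (t \<circ> a)"
      have uT: "?u \<in> T" using rpT[OF ta] .
      have "rc K (?u \<circ> b) = rc K (t \<circ> a \<circ> b)"
        using rpA[OF ta] rc_comp[of K ?u b] rc_comp[of K "t \<circ> a" b] by simp
      then have "rp (?u \<circ> b) = rp (t \<circ> a \<circ> b)" by (rule rp_cong)
      then have eq: "rp (?u \<circ> b) = rp (t \<circ> (a \<circ> b))" by (simp add: comp_assoc)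
      have m1: "t \<circ> a \<circ> iv ?u \<in> generate Sym S" using IHa t by blast
      have m2: "?u \<circ> b \<circ> iv (rp (?u \<circ> b)) \<in> generate Sym S" using IHb uT by blast
      have "(t \<circ> a \<circ> iv ?u) \<circ> (?u \<circ> b \<circ> iv (rp (?u \<circ> b))) \<in> generate Sym S"
        using sub_comp[OF sS m1 m2] .
      moreover have "(t \<circ> a \<circ> iv ?u) \<circ> (?u \<circ> b \<circ> iv (rp (?u \<circ> b))) = t \<circ> (a \<circ> b) \<circ> iv (rp (t \<circ> (a \<circ> b)))"
        using bA[OF TA[OF uT]] eq by (simp add: comp_assoc)
      ultimately show "t \<circ> (a \<circ> b) \<circ> iv (rp (t \<circ> (a \<circ> b))) \<in> generate Sym S" by simp
    qed
  qed
  have idT: "id \<in> T"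
  proof -
    have "rp id = id" using rc_id[of K] by (simp add: rp_def rep_def)
    then show ?thesis using rpT[OF sub_id[OF sA]] by simp
  qed
  have "K \<subseteq> generate Sym S"
  proof
    fix k assume k: "k \<in> K"
    then have kA: "k \<in> ?A" using KA by blast
    have "rp k = id" using rc_sub[OF sK k] by (simp add: rp_def rep_def)
    moreover have "id \<circ> k \<circ> iv (rp (id \<circ> k)) \<in> generate Sym S" using claim[OF kA] idT by blast
    ultimately show "k \<in> generate Sym S" by simp
  qed
  moreover have "generate Sym S \<subseteq> K" using gen_min[OF sK SK] .
  ultimately show ?thesis using finS bS by blast
qed




lemma comm_iv: assumes "bij a" "bij b" "a \<circ> b = b \<circ> a" shows "a \<circ> iv b = iv b \<circ> a"
proof -
  have "iv b \<circ> (a \<circ> b) \<circ> iv b = iv b \<circ> (b \<circ> a) \<circ> iv b" using assms(3) by simp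
  then show ?thesis using assms(2) by (simp add: comp_assoc)
qed

lemma lcomm: "a \<circ> b = b \<circ> a \<Longrightarrow> a \<circ> (b \<circ> f) = b \<circ> (a \<circ> f)"
  by (metis comp_assoc)

lemma conj_comm: assumes "bij a" "a \<circ> b = b \<circ> a" shows "a \<circ> b \<circ> iv a = b"
  using assms by (simp add: comp_assoc)

lemma conj_restr:
  assumes "bij w" "pres w A" "fixout x A" "bij x"
  shows "w \<circ> x \<circ> iv w = restr w A \<circ> x \<circ> iv (restr w A)"
proof -
  let ?a = "restr w A" and ?b = "restr w (-A)"
  have pc: "pres w (-A)" using assms(2) by (auto simp: pres_def)
  have ba: "bij ?a" using restr_bij assms(1,2) by blast
  have bb: "bij ?b" using restr_bij assms(1) pc by blast
  have w: "w = ?a \<circ> ?b" using restr_decomp[OF assms(2)] .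
  have fb: "fixout ?b (-A)" by (rule restr_fixout)
  have c: "?b \<circ> x = x \<circ> ?b" using fixout_commute[OF bb assms(4) fb assms(3)] by blast
  have "w \<circ> x \<circ> iv w = (?a \<circ> ?b) \<circ> x \<circ> iv (?a \<circ> ?b)"
    using w by (rule arg_cong[where f = "\<lambda>u. u \<circ> x \<circ> iv u"])
  also have "... = ?a \<circ> (?b \<circ> x \<circ> iv ?b) \<circ> iv ?a"
    using ba bb by (simp add: iv_comp comp_assoc)
  also have "?b \<circ> x \<circ> iv ?b = x" using conj_comm[OF bb c] .
  finally show ?thesis .
qed

lemma commutator4:
  assumes b: "bij p" "bij q" "bij w" "bij c"
    and pq: "p \<circ> q = q \<circ> p" and pw: "p \<circ> w = w \<circ> p" and pc: "p \<circ> c = c \<circ> p"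
    and cq: "c \<circ> q = q \<circ> c" and cw: "c \<circ> w = w \<circ> c"
  shows "(p \<circ> q) \<circ> (w \<circ> c) \<circ> iv (p \<circ> q) \<circ> iv (w \<circ> c) = q \<circ> w \<circ> iv q \<circ> iv w"
proof -
  have r1: "c \<circ> (iv q \<circ> f) = iv q \<circ> (c \<circ> f)" for f using lcomm[OF comm_iv[OF b(4,2) cq]] .
  have r2: "c \<circ> (iv p \<circ> f) = iv p \<circ> (c \<circ> f)" for f using lcomm[OF comm_iv[OF b(4,1) pc[symmetric]]] .
  have r3: "p \<circ> (q \<circ> f) = q \<circ> (p \<circ> f)" for f using lcomm[OF pq] .
  have r4: "p \<circ> (w \<circ> f) = w \<circ> (p \<circ> f)" for f using lcomm[OF pw] .
  have r5: "p \<circ> (iv q \<circ> f) = iv q \<circ> (p \<circ> f)" for f using lcomm[OF comm_iv[OF b(1,2) pq]] .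
  have "(p \<circ> q) \<circ> (w \<circ> c) \<circ> iv (p \<circ> q) \<circ> iv (w \<circ> c) = p \<circ> (q \<circ> (w \<circ> (c \<circ> (iv q \<circ> (iv p \<circ> (iv c \<circ> iv w))))))"
    using b by (simp add: iv_comp comp_assoc)
  also have "... = p \<circ> (q \<circ> (w \<circ> (iv q \<circ> (iv p \<circ> iv w))))"
    using b by (simp only: r1 r2 iv_c1')
  also have "... = q \<circ> (w \<circ> (iv q \<circ> iv w))"
    using b by (simp only: r3 r4 r5 iv_c1')
  finally show ?thesis by (simp add: comp_assoc)
qed




locale setting =
  fixes G P :: "('a \<Rightarrow> 'a) set" and Om :: "('a \<Rightarrow> 'a) \<Rightarrow> 'a set"
    and sg :: "'a \<Rightarrow> 'a" and Hk :: "('a \<Rightarrow> 'a) set" and m :: nat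
  assumes Hk_sub: "subgroup Hk Sym"
    and G_sub: "subgroup G Sym"
    and P_bij: "P \<subseteq> carrier Sym"
    and DC: "displacement_configuration P Om"
    and nontriv: "\<And>\<tau>. \<tau> \<in> P \<Longrightarrow> Rist G (Om \<tau>) \<noteq> {\<one>\<^bsub>Sym\<^esub>}"
    and FC: "\<And>\<tau>. \<tau> \<in> P \<Longrightarrow> FC_le m (Rist G (Om \<tau>)) = {\<one>\<^bsub>Sym\<^esub>}"
    and sgP: "sg \<in> P"
    and idx: "index_le (Dgrp (Rgrp G P Om) sg Hk) (Rgrp G P Om) m"
begin

definition "U = (\<Union>\<alpha>\<in>P. Om \<alpha>)"
definition "MS = Mset P Om sg"
definition "UM = (\<Union>\<tau>\<in>MS. Om \<tau>)"
definition "R = Rgrp G P Om"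
definition "Y = Yset R sg Hk"
definition "D = Dgrp R sg Hk"
definition "rM r = restr r UM"
definition "star x = iv sg \<circ> x \<circ> sg"

lemma G_bij: "g \<in> G \<Longrightarrow> bij g" using sub_bij[OF G_sub] .
lemma G_comp: "a \<in> G \<Longrightarrow> b \<in> G \<Longrightarrow> a \<circ> b \<in> G" using sub_comp[OF G_sub] .
lemma G_iv: "a \<in> G \<Longrightarrow> iv a \<in> G" using sub_iv[OF G_sub] .
lemma G_id: "id \<in> G" using sub_id[OF G_sub] .

lemma Rist_fix: "g \<in> Rist G A \<Longrightarrow> fixout g A" by (simp add: Rist_def fixout_def)
lemma Rist_G: "g \<in> Rist G A \<Longrightarrow> g \<in> G" by (simp add: Rist_def)
lemma Rist_I: "g \<in> G \<Longrightarrow> fixout g A \<Longrightarrow> g \<in> Rist G A" by (simp add: Rist_def fixout_def)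

lemma Rist_sub: "subgroup (Rist G A) Sym"
proof (rule sub_I)
  show "bij x" if "x \<in> Rist G A" for x using G_bij Rist_G that by blast
  show "id \<in> Rist G A" using G_id fixout_id Rist_I by blast
  show "x \<circ> y \<in> Rist G A" if "x \<in> Rist G A" "y \<in> Rist G A" for x y
    using that G_comp Rist_G Rist_fix fixout_comp Rist_I by metis
  show "iv x \<in> Rist G A" if "x \<in> Rist G A" for x
  proof -
    have "bij x" using G_bij Rist_G that by blast
    then show ?thesis using that G_iv Rist_G Rist_fix fixout_iv Rist_I by metis
  qed
qed

lemma sg_bij: "bij sg" using sgP P_bij Sym_carrier by blast

lemma dc_disj: "\<tau> \<in> P \<Longrightarrow> \<rho> \<in> P \<Longrightarrow> Om \<tau> = Om \<rho> \<or> Om \<tau> \<inter> Om \<rho> = {}"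
  using DC by (simp add: displacement_configuration_def)

lemma dc_ne: "\<tau> \<in> P \<Longrightarrow> Om \<tau> \<noteq> {}"
  using DC by (simp add: displacement_configuration_def)

lemma dc3: "\<rho> \<in> P \<Longrightarrow> (\<forall>x\<in>Om \<rho>. sg x = x) \<or> sg ` Om \<rho> \<inter> U = {}"
  using DC sgP by (simp add: displacement_configuration_def U_def)

lemma dc4a: "sg ` Om sg \<inter> U = {}"
  using DC sgP by (simp add: displacement_configuration_def U_def)

lemma dc4b: "sg ` Om sg \<inter> (\<Union>\<alpha>\<in>P. iv sg ` Om \<alpha>) = {}"
proof -
  have "sg ` Om sg \<inter> (\<Union>\<alpha>\<in>P. (inv\<^bsub>Sym\<^esub> sg) ` Om \<alpha>) = {}"
    using DC sgP by (simp add: displacement_configuration_def)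
  then show ?thesis using Sym_inv[OF sg_bij] by simp
qed

lemma MS_P: "MS \<subseteq> P" by (auto simp: MS_def Mset_def)
lemma MS_iff: "\<tau> \<in> MS \<longleftrightarrow> \<tau> \<in> P \<and> sg ` Om \<tau> \<inter> U = {}"
  by (auto simp: MS_def Mset_def U_def)

lemma UM_U: "UM \<subseteq> U" using MS_P by (auto simp: UM_def U_def)
lemma Om_U: "\<tau> \<in> P \<Longrightarrow> Om \<tau> \<subseteq> U" by (auto simp: U_def)
lemma Om_UM: "\<tau> \<in> MS \<Longrightarrow> Om \<tau> \<subseteq> UM" by (auto simp: UM_def)

lemma M1: "sg \<in> MS" using MS_iff sgP dc4a by blast

lemma M2: "x \<in> UM \<Longrightarrow> sg x \<notin> U"
  using MS_iff by (auto simp: UM_def)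

lemma M3: assumes "x \<in> U" "x \<notin> UM" shows "sg x = x"
proof -
  obtain \<alpha> where a: "\<alpha> \<in> P" "x \<in> Om \<alpha>" using assms(1) by (auto simp: U_def)
  then have "\<alpha> \<notin> MS" using assms(2) by (auto simp: UM_def)
  then have "sg ` Om \<alpha> \<inter> U \<noteq> {}" using MS_iff a by blast
  then show ?thesis using dc3[OF a(1)] a(2) by blast
qed

lemma M4: assumes "y \<in> U" shows "sg y \<notin> UM"
proof (cases "y \<in> UM")
  case True then show ?thesis using M2 UM_U by blast
next
  case False then show ?thesis using M3[OF assms] by simp
qed

lemma M5: assumes "x \<in> Om sg" shows "sg (sg x) \<notin> U"
proof
  assume "sg (sg x) \<in> U"
  then obtain \<alpha> where "\<alpha> \<in> P" "sg (sg x) \<in> Om \<alpha>" by (auto simp: U_def)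
  then have "iv sg (sg (sg x)) \<in> iv sg ` Om \<alpha>" by blast
  then have "sg x \<in> (\<Union>\<alpha>\<in>P. iv sg ` Om \<alpha>)" using sg_bij \<open>\<alpha> \<in> P\<close> by auto
  moreover have "sg x \<in> sg ` Om sg" using assms by blast
  ultimately show False using dc4b by blast
qed

definition "SU = iv sg ` UM"
definition "SS = sg ` Om sg"

lemma SU_U: "SU \<inter> U = {}"
proof -
  have "z \<notin> U" if zS: "z \<in> SU" for z
  proof
    assume zU: "z \<in> U"
    obtain y where y: "y \<in> UM" "z = iv sg y" using zS by (auto simp: SU_def)
    then have "sg z = y" using sg_bij by simp
    then show False using M4[OF zU] y(1) by simp
  qed
  then show ?thesis by blast
qed

lemma SS_U: "SS \<inter> U = {}" using dc4a by (simp add: SS_def)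

lemma SS_SU: "SS \<inter> SU = {}"
proof -
  have "False" if zz: "z \<in> SS" "z \<in> SU" for z
  proof -
    obtain x where x: "x \<in> Om sg" "z = sg x" using zz(1) by (auto simp: SS_def)
    obtain y where y: "y \<in> UM" "z = iv sg y" using zz(2) by (auto simp: SU_def)
    have "sg (iv sg y) = y" using sg_bij by simp
    then have "sg (sg x) = y" using x y by simp
    then show False using M5[OF x(1)] UM_U y(1) by blast
  qed
  then show ?thesis by blast
qed

lemma star_bij: "bij x \<Longrightarrow> bij (star x)" using sg_bij by (simp add: star_def)
lemma star_fix: assumes "bij x" "fixout x UM" shows "fixout (star x) SU"
proof -
  have "fixout (iv sg \<circ> x \<circ> iv (iv sg)) (iv sg ` UM)"
    using fixout_conj[OF bij_iv[OF sg_bij] assms(2)] .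
  then show ?thesis using sg_bij by (simp add: star_def SU_def)
qed
lemma star_comp: "star (x \<circ> y) = star x \<circ> star y" using sg_bij by (simp add: star_def comp_assoc)
lemma star_id: "star id = id" using sg_bij by (simp add: star_def)

end



context setting begin

abbreviation "Gens \<equiv> (\<Union>\<tau>\<in>P. Rist G (Om \<tau>))"

lemma R_gen: "R = generate Sym Gens" by (simp add: R_def Rgrp_def)

lemma Gens_bij: "x \<in> Gens \<Longrightarrow> bij x" using G_bij Rist_G by blast

lemma gen_lemma:
  assumes g: "g \<in> Rist G (Om \<alpha>)" and a: "\<alpha> \<in> P" and t: "\<tau> \<in> P"
  shows "pres g (Om \<tau>) \<and> restr g (Om \<tau>) \<in> Rist G (Om \<tau>)"
proof -
  have bg: "bij g" using G_bij Rist_G g by blast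
  have fg: "fixout g (Om \<alpha>)" using Rist_fix g by blast
  have pg: "pres g (Om \<alpha>)" using fixout_pres[OF bg fg] .
  show ?thesis
  proof (cases "Om \<alpha> = Om \<tau>")
    case True
    have "restr g (Om \<tau>) = g" using restr_of_fixout[OF fg] True by simp
    then show ?thesis using pg g True by simp
  next
    case False
    then have dj: "Om \<alpha> \<inter> Om \<tau> = {}" using dc_disj[OF a t] by blast
    have fx: "g x = x" if "x \<in> Om \<tau>" for x using fixoutD[OF fg] that dj by blast
    have "pres g (Om \<tau>)"
      unfolding pres_def
    proof
      fix x
      show "(g x \<in> Om \<tau>) = (x \<in> Om \<tau>)"
      proof (cases "x \<in> Om \<tau>")
        case True then show ?thesis using fx by simp
      next
        case F: False
        show ?thesis
        proof (cases "x \<in> Om \<alpha>")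
          case True
          then have "g x \<in> Om \<alpha>" using presD[OF pg] by simp
          then show ?thesis using dj F by blast
        next
          case False
          then show ?thesis using fixoutD[OF fg] F by simp
        qed
      qed
    qed
    moreover have "restr g (Om \<tau>) = id" using fx by (auto simp: restr_def fun_eq_iff)
    ultimately show ?thesis using sub_id[OF Rist_sub] by simp
  qed
qed

lemma R_props:
  assumes "r \<in> R"
  shows "bij r \<and> r \<in> G \<and> fixout r U \<and> (\<forall>\<tau>\<in>P. pres r (Om \<tau>) \<and> restr r (Om \<tau>) \<in> Rist G (Om \<tau>))"
proof -
  have gen: "bij h \<and> h \<in> G \<and> fixout h U \<and> (\<forall>\<tau>\<in>P. pres h (Om \<tau>) \<and> restr h (Om \<tau>) \<in> Rist G (Om \<tau>))"
    if "h \<in> Rist G (Om \<alpha>)" "\<alpha> \<in> P" for h \<alpha>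
  proof -
    have "bij h" "h \<in> G" using G_bij Rist_G that by blast+
    moreover have "fixout h U" using Rist_fix[OF that(1)] Om_U[OF that(2)] fixout_mono by blast
    moreover have "\<forall>\<tau>\<in>P. pres h (Om \<tau>) \<and> restr h (Om \<tau>) \<in> Rist G (Om \<tau>)"
      using gen_lemma that by blast
    ultimately show ?thesis by blast
  qed
  show ?thesis
  proof (rule gen_induct[OF assms[unfolded R_gen] Gens_bij, where P = "\<lambda>r. bij r \<and> r \<in> G \<and> fixout r U \<and> (\<forall>\<tau>\<in>P. pres r (Om \<tau>) \<and> restr r (Om \<tau>) \<in> Rist G (Om \<tau>))"])
    show "bij id \<and> id \<in> G \<and> fixout id U \<and> (\<forall>\<tau>\<in>P. pres id (Om \<tau>) \<and> restr id (Om \<tau>) \<in> Rist G (Om \<tau>))"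
      by (simp add: G_id fixout_id pres_id restr_id sub_id[OF Rist_sub])
  next
    fix h assume "h \<in> Gens"
    then show "bij h \<and> h \<in> G \<and> fixout h U \<and> (\<forall>\<tau>\<in>P. pres h (Om \<tau>) \<and> restr h (Om \<tau>) \<in> Rist G (Om \<tau>))"
      using gen by blast
  next
    fix h assume "h \<in> Gens"
    then obtain \<alpha> where "\<alpha> \<in> P" "h \<in> Rist G (Om \<alpha>)" by blast
    then have "iv h \<in> Rist G (Om \<alpha>)" using sub_iv[OF Rist_sub] by blast
    then show "bij (iv h) \<and> iv h \<in> G \<and> fixout (iv h) U \<and> (\<forall>\<tau>\<in>P. pres (iv h) (Om \<tau>) \<and> restr (iv h) (Om \<tau>) \<in> Rist G (Om \<tau>))"
      using gen \<open>\<alpha> \<in> P\<close> by blast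
  next
    fix a b
    assume A: "bij a \<and> a \<in> G \<and> fixout a U \<and> (\<forall>\<tau>\<in>P. pres a (Om \<tau>) \<and> restr a (Om \<tau>) \<in> Rist G (Om \<tau>))"
      and B: "bij b \<and> b \<in> G \<and> fixout b U \<and> (\<forall>\<tau>\<in>P. pres b (Om \<tau>) \<and> restr b (Om \<tau>) \<in> Rist G (Om \<tau>))"
    have "bij (a \<circ> b)" using A B by simp
    moreover have "a \<circ> b \<in> G" using A B G_comp by blast
    moreover have "fixout (a \<circ> b) U" using A B fixout_comp by blast
    moreover have "\<forall>\<tau>\<in>P. pres (a \<circ> b) (Om \<tau>) \<and> restr (a \<circ> b) (Om \<tau>) \<in> Rist G (Om \<tau>)"
    proof
      fix \<tau> assume t: "\<tau> \<in> P"
      have "pres (a \<circ> b) (Om \<tau>)" using A B t pres_comp by blast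
      moreover have pb: "pres b (Om \<tau>)" using B t by blast
      moreover have "restr (a \<circ> b) (Om \<tau>) = restr a (Om \<tau>) \<circ> restr b (Om \<tau>)"
        using restr_comp[OF pb] .
      moreover have "restr a (Om \<tau>) \<circ> restr b (Om \<tau>) \<in> Rist G (Om \<tau>)"
        using sub_comp[OF Rist_sub] A B t by blast
      ultimately show "pres (a \<circ> b) (Om \<tau>) \<and> restr (a \<circ> b) (Om \<tau>) \<in> Rist G (Om \<tau>)" by simp
    qed
    ultimately show "bij (a \<circ> b) \<and> a \<circ> b \<in> G \<and> fixout (a \<circ> b) U \<and> (\<forall>\<tau>\<in>P. pres (a \<circ> b) (Om \<tau>) \<and> restr (a \<circ> b) (Om \<tau>) \<in> Rist G (Om \<tau>))"
      by blast
  qed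
qed

lemma R_bij: assumes "r \<in> R" shows "bij r" using R_props[OF assms] by (rule conjunct1)
lemma R_G: assumes "r \<in> R" shows "r \<in> G" using conjunct1[OF conjunct2[OF R_props[OF assms]]] .
lemma R_fix: assumes "r \<in> R" shows "fixout r U" using conjunct1[OF conjunct2[OF conjunct2[OF R_props[OF assms]]]] .
lemma R_pres: assumes "r \<in> R" "\<tau> \<in> P" shows "pres r (Om \<tau>)"
  using conjunct1[OF bspec[OF conjunct2[OF conjunct2[OF conjunct2[OF R_props[OF assms(1)]]]] assms(2)]] .
lemma R_restr: assumes "r \<in> R" "\<tau> \<in> P" shows "restr r (Om \<tau>) \<in> Rist G (Om \<tau>)"
  using conjunct2[OF bspec[OF conjunct2[OF conjunct2[OF conjunct2[OF R_props[OF assms(1)]]]] assms(2)]] .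

lemma R_sub: "subgroup R Sym" unfolding R_gen by (rule gen_sub[OF Gens_bij])
lemma R_comp: "a \<in> R \<Longrightarrow> b \<in> R \<Longrightarrow> a \<circ> b \<in> R" by (rule sub_comp[OF R_sub])
lemma R_iv: "a \<in> R \<Longrightarrow> iv a \<in> R" by (rule sub_iv[OF R_sub])
lemma R_id: "id \<in> R" by (rule sub_id[OF R_sub])
lemma Fr_R: assumes "\<tau> \<in> P" shows "Rist G (Om \<tau>) \<subseteq> R"
proof
  fix x assume "x \<in> Rist G (Om \<tau>)"
  then have "x \<in> Gens" using assms by blast
  then show "x \<in> R" unfolding R_gen by (rule gen_incl)
qed

lemma R_presUM: assumes "r \<in> R" shows "pres r UM"
  unfolding pres_def
proof
  fix x
  have "(r x \<in> Om \<tau>) = (x \<in> Om \<tau>)" if "\<tau> \<in> MS" for \<tau>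
  proof -
    have "\<tau> \<in> P" using that MS_P by blast
    then show ?thesis using presD[OF R_pres[OF assms]] by blast
  qed
  then show "(r x \<in> UM) = (x \<in> UM)" by (auto simp: UM_def)
qed

lemma rM_bij: "r \<in> R \<Longrightarrow> bij (rM r)" unfolding rM_def by (rule restr_bij[OF R_bij R_presUM])
lemma rM_fix: "fixout (rM r) UM" unfolding rM_def by (rule restr_fixout)
lemma rM_comp: "pres b UM \<Longrightarrow> rM (a \<circ> b) = rM a \<circ> rM b" unfolding rM_def by (rule restr_comp)
lemma rM_iv: "r \<in> R \<Longrightarrow> rM (iv r) = iv (rM r)" unfolding rM_def using restr_iv[OF R_bij R_presUM] by simp
lemma rM_self: "fixout x UM \<Longrightarrow> rM x = x" unfolding rM_def by (rule restr_of_fixout)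
lemma rM_id: "rM id = id" unfolding rM_def by (rule restr_id)

lemma R_decomp: "r \<in> R \<Longrightarrow> r = rM r \<circ> restr r (-UM)"
  unfolding rM_def by (rule restr_decomp[OF R_presUM])

lemma rO_bij: assumes "r \<in> R" shows "bij (restr r (-UM))"
proof -
  have "pres r (-UM)" using R_presUM[OF assms] by (auto simp: pres_def)
  then show ?thesis by (rule restr_bij[OF R_bij[OF assms]])
qed

lemma sg_rO: assumes "r \<in> R" shows "sg \<circ> restr r (-UM) = restr r (-UM) \<circ> sg"
proof -
  have f1: "fixout sg (-(U \<inter> -UM))" unfolding fixout_def
  proof (intro allI impI)
    fix x assume "x \<notin> - (U \<inter> - UM)"
    then show "sg x = x" using M3 by simp
  qed
  have f2: "fixout (restr r (-UM)) (U \<inter> -UM)"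
    unfolding fixout_def
  proof (intro allI impI)
    fix x assume x: "x \<notin> U \<inter> - UM"
    show "restr r (- UM) x = x"
    proof (cases "x \<in> UM")
      case True then show ?thesis by (simp add: restr_def)
    next
      case False then show ?thesis using x fixoutD[OF R_fix[OF assms], of x] by (simp add: restr_def)
    qed
  qed
  have "(-(U \<inter> -UM)) \<inter> (U \<inter> -UM) = {}" by blast
  then show ?thesis by (rule fixout_commute[OF sg_bij rO_bij[OF assms] f1 f2])
qed

lemma comm_U_SU: assumes "bij g" "fixout g U" "bij x" "fixout x SU" shows "g \<circ> x = x \<circ> g"
proof -
  have "U \<inter> SU = {}" using SU_U by blast
  then show ?thesis by (rule fixout_commute[OF assms(1) assms(3) assms(2) assms(4)])
qed

lemma Y_iff: "\<gamma> \<in> Y \<longleftrightarrow> \<gamma> \<in> R \<and> \<gamma> \<circ> sg \<circ> iv \<gamma> \<in> Hk"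
proof -
  have "\<gamma> \<in> R \<Longrightarrow> \<gamma> \<otimes>\<^bsub>Sym\<^esub> sg \<otimes>\<^bsub>Sym\<^esub> inv\<^bsub>Sym\<^esub> \<gamma> = \<gamma> \<circ> sg \<circ> iv \<gamma>"
    using R_bij sg_bij by (simp add: Sym_mult Sym_inv)
  then show ?thesis by (auto simp: Y_def Yset_def)
qed

definition "Gd = {\<gamma> \<circ> iv \<delta> | \<gamma> \<delta>. \<gamma> \<in> Y \<and> \<delta> \<in> Y}"

lemma D_gen: "D = generate Sym Gd"
proof -
  have "\<gamma> \<in> Y \<Longrightarrow> \<delta> \<in> Y \<Longrightarrow> \<gamma> \<otimes>\<^bsub>Sym\<^esub> inv\<^bsub>Sym\<^esub> \<delta> = \<gamma> \<circ> iv \<delta>" for \<gamma> \<delta>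
    using R_bij Y_iff by (simp add: Sym_mult Sym_inv)
  then have "{\<gamma> \<otimes>\<^bsub>Sym\<^esub> inv\<^bsub>Sym\<^esub> \<delta> | \<gamma> \<delta>. \<gamma> \<in> Yset R sg Hk \<and> \<delta> \<in> Yset R sg Hk} = Gd"
    unfolding Gd_def Y_def[symmetric] by force
  then show ?thesis by (simp add: D_def Dgrp_def)
qed

lemma Gd_R: "Gd \<subseteq> R" unfolding Gd_def using Y_iff R_comp R_iv by blast
lemma Gd_bij: "x \<in> Gd \<Longrightarrow> bij x" using Gd_R R_bij by blast
lemma D_sub: "subgroup D Sym" unfolding D_gen by (rule gen_sub[OF Gd_bij])
lemma D_R: "D \<subseteq> R" unfolding D_gen using gen_min[OF R_sub Gd_R] .

end



context setting begin

lemma rM_pres: "r \<in> R \<Longrightarrow> pres (rM r) UM"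
  unfolding rM_def by (rule restr_pres[OF R_presUM R_presUM])

lemma K1:
  assumes g: "\<gamma> \<in> R" and d: "\<delta> \<in> R"
  shows "iv (\<gamma> \<circ> sg \<circ> iv \<gamma>) \<circ> (\<delta> \<circ> sg \<circ> iv \<delta>) = star (rM (iv \<gamma> \<circ> \<delta>)) \<circ> rM (\<gamma> \<circ> iv \<delta>)"
proof -
  have bg: "bij \<gamma>" by (rule R_bij[OF g])
  have bd: "bij \<delta>" by (rule R_bij[OF d])
  have bs: "bij sg" by (rule sg_bij)
  define a where "a = iv \<gamma> \<circ> \<delta>"
  have aR: "a \<in> R" unfolding a_def by (rule R_comp[OF R_iv[OF g] d])
  have ba: "bij a" by (rule R_bij[OF aR])
  define aM where "aM = rM a"
  define aO where "aO = restr a (-UM)"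
  have bM: "bij aM" unfolding aM_def by (rule rM_bij[OF aR])
  have bO: "bij aO" unfolding aO_def by (rule rO_bij[OF aR])
  have dec: "a = aM \<circ> aO" unfolding aM_def aO_def by (rule R_decomp[OF aR])
  have sO: "sg \<circ> aO = aO \<circ> sg" unfolding aO_def by (rule sg_rO[OF aR])
  have fM: "fixout aM UM" unfolding aM_def by (rule rM_fix)
  have fsM: "fixout (star aM) SU" by (rule star_fix[OF bM fM])
  have bsM: "bij (star aM)" by (rule star_bij[OF bM])
  have e3: "\<gamma> \<circ> star aM = star aM \<circ> \<gamma>" by (rule comm_U_SU[OF bg R_fix[OF g] bsM fsM])
  have e1: "iv (\<gamma> \<circ> sg \<circ> iv \<gamma>) \<circ> (\<delta> \<circ> sg \<circ> iv \<delta>) = \<gamma> \<circ> (iv sg \<circ> a \<circ> sg) \<circ> iv \<delta>"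
    unfolding a_def using bg bd bs by (simp add: iv_comp comp_assoc)
  have e2: "iv sg \<circ> a \<circ> sg = star aM \<circ> aO"
  proof -
    have "iv sg \<circ> a \<circ> sg = iv sg \<circ> (aM \<circ> aO) \<circ> sg" using dec by simp
    also have "... = iv sg \<circ> aM \<circ> (aO \<circ> sg)" by (simp add: comp_assoc)
    also have "... = iv sg \<circ> aM \<circ> (sg \<circ> aO)" using sO by simp
    also have "... = star aM \<circ> aO" by (simp add: star_def comp_assoc)
    finally show ?thesis .
  qed
  have e5: "aO = iv aM \<circ> a" using dec bM by (simp add: comp_assoc)
  have e4: "a \<circ> iv \<delta> = iv \<gamma>" unfolding a_def using bd by (simp add: comp_assoc)
  have e6: "\<gamma> \<circ> iv aM \<circ> iv \<gamma> = rM \<gamma> \<circ> iv aM \<circ> rM (iv \<gamma>)"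
  proof -
    have "\<gamma> \<circ> iv aM \<circ> iv \<gamma> = restr \<gamma> UM \<circ> iv aM \<circ> iv (restr \<gamma> UM)"
      by (rule conj_restr[OF bg R_presUM[OF g] fixout_iv[OF bM fM] bij_iv[OF bM]])
    then show ?thesis using rM_iv[OF g] by (simp add: rM_def)
  qed
  have e7: "rM (\<gamma> \<circ> iv \<delta>) = rM \<gamma> \<circ> iv aM \<circ> rM (iv \<gamma>)"
  proof -
    have "iv a = iv \<delta> \<circ> \<gamma>" unfolding a_def using bg bd by (simp add: iv_comp)
    then have "\<gamma> \<circ> iv \<delta> = \<gamma> \<circ> iv a \<circ> iv \<gamma>" using bg by (simp add: comp_assoc)
    then have "rM (\<gamma> \<circ> iv \<delta>) = rM (\<gamma> \<circ> iv a \<circ> iv \<gamma>)" by simp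
    also have "... = rM (\<gamma> \<circ> iv a) \<circ> rM (iv \<gamma>)" by (rule rM_comp[OF R_presUM[OF R_iv[OF g]]])
    also have "rM (\<gamma> \<circ> iv a) = rM \<gamma> \<circ> rM (iv a)" by (rule rM_comp[OF R_presUM[OF R_iv[OF aR]]])
    also have "rM (iv a) = iv aM" unfolding aM_def by (rule rM_iv[OF aR])
    finally show ?thesis .
  qed
  have "iv (\<gamma> \<circ> sg \<circ> iv \<gamma>) \<circ> (\<delta> \<circ> sg \<circ> iv \<delta>) = \<gamma> \<circ> (star aM \<circ> aO) \<circ> iv \<delta>"
    using e1 e2 by simp
  also have "... = (\<gamma> \<circ> star aM) \<circ> aO \<circ> iv \<delta>" by (simp add: comp_assoc)
  also have "... = star aM \<circ> (\<gamma> \<circ> (aO \<circ> iv \<delta>))" using e3 by (simp add: comp_assoc)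
  also have "aO \<circ> iv \<delta> = iv aM \<circ> iv \<gamma>" using e5 e4 by (simp add: comp_assoc)
  also have "\<gamma> \<circ> (iv aM \<circ> iv \<gamma>) = rM (\<gamma> \<circ> iv \<delta>)" using e6 e7 by (simp add: comp_assoc)
  finally show ?thesis unfolding aM_def a_def .
qed

lemma stepA: assumes "d \<in> D" shows "\<exists>r\<in>R. star (rM r) \<circ> rM d \<in> Hk"
proof (rule gen_induct[OF assms[unfolded D_gen] Gd_bij, where P = "\<lambda>d. \<exists>r\<in>R. star (rM r) \<circ> rM d \<in> Hk"])
  have "star (rM id) \<circ> rM id = id" by (simp add: rM_id star_id)
  then show "\<exists>r\<in>R. star (rM r) \<circ> rM id \<in> Hk" using R_id sub_id[OF Hk_sub] by metis
next
  have gen: "star (rM (iv \<gamma> \<circ> \<delta>)) \<circ> rM (\<gamma> \<circ> iv \<delta>) \<in> Hk" if "\<gamma> \<in> Y" "\<delta> \<in> Y" for \<gamma> \<delta>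
  proof -
    have g: "\<gamma> \<in> R" "\<gamma> \<circ> sg \<circ> iv \<gamma> \<in> Hk" using that(1) Y_iff by blast+
    have d: "\<delta> \<in> R" "\<delta> \<circ> sg \<circ> iv \<delta> \<in> Hk" using that(2) Y_iff by blast+
    have "iv (\<gamma> \<circ> sg \<circ> iv \<gamma>) \<circ> (\<delta> \<circ> sg \<circ> iv \<delta>) \<in> Hk"
      by (rule sub_comp[OF Hk_sub sub_iv[OF Hk_sub g(2)] d(2)])
    then show ?thesis unfolding K1[OF g(1) d(1)] .
  qed
  {
    fix h assume "h \<in> Gd"
    then obtain \<gamma> \<delta> where gd: "\<gamma> \<in> Y" "\<delta> \<in> Y" "h = \<gamma> \<circ> iv \<delta>" unfolding Gd_def by blast
    have "iv \<gamma> \<circ> \<delta> \<in> R" using gd Y_iff R_comp R_iv by blast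
    then show "\<exists>r\<in>R. star (rM r) \<circ> rM h \<in> Hk" using gen[OF gd(1,2)] gd(3) by blast
  next
    fix h assume "h \<in> Gd"
    then obtain \<gamma> \<delta> where gd: "\<gamma> \<in> Y" "\<delta> \<in> Y" "h = \<gamma> \<circ> iv \<delta>" unfolding Gd_def by blast
    have "iv h = \<delta> \<circ> iv \<gamma>" using gd Y_iff R_bij iv_comp by (simp add: iv_comp)
    moreover have "iv \<delta> \<circ> \<gamma> \<in> R" using gd Y_iff R_comp R_iv by blast
    ultimately show "\<exists>r\<in>R. star (rM r) \<circ> rM (iv h) \<in> Hk" using gen[OF gd(2,1)] by metis
  }
next
  fix a b
  assume a: "a \<in> generate Sym Gd" and b: "b \<in> generate Sym Gd"
    and IHa: "\<exists>r\<in>R. star (rM r) \<circ> rM a \<in> Hk" and IHb: "\<exists>r\<in>R. star (rM r) \<circ> rM b \<in> Hk"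
  obtain r1 where r1: "r1 \<in> R" "star (rM r1) \<circ> rM a \<in> Hk" using IHa by blast
  obtain r2 where r2: "r2 \<in> R" "star (rM r2) \<circ> rM b \<in> Hk" using IHb by blast
  have aR: "a \<in> R" using a D_R unfolding D_gen by blast
  have bR: "b \<in> R" using b D_R unfolding D_gen by blast
  have c: "rM a \<circ> star (rM r2) = star (rM r2) \<circ> rM a"
  proof (rule comm_U_SU[OF rM_bij[OF aR] _ star_bij[OF rM_bij[OF r2(1)]] star_fix[OF rM_bij[OF r2(1)] rM_fix]])
    show "fixout (rM a) U" using rM_fix UM_U fixout_mono by blast
  qed
  have "(star (rM r1) \<circ> rM a) \<circ> (star (rM r2) \<circ> rM b) \<in> Hk"
    by (rule sub_comp[OF Hk_sub r1(2) r2(2)])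
  moreover have "(star (rM r1) \<circ> rM a) \<circ> (star (rM r2) \<circ> rM b) = star (rM (r1 \<circ> r2)) \<circ> rM (a \<circ> b)"
  proof -
    have "(star (rM r1) \<circ> rM a) \<circ> (star (rM r2) \<circ> rM b) = star (rM r1) \<circ> (rM a \<circ> star (rM r2)) \<circ> rM b"
      by (simp add: comp_assoc)
    also have "... = star (rM r1) \<circ> (star (rM r2) \<circ> rM a) \<circ> rM b" using c by simp
    also have "... = star (rM r1 \<circ> rM r2) \<circ> (rM a \<circ> rM b)" by (simp add: star_comp comp_assoc)
    also have "rM r1 \<circ> rM r2 = rM (r1 \<circ> r2)" by (rule rM_comp[OF R_presUM[OF r2(1)], symmetric])
    also have "rM a \<circ> rM b = rM (a \<circ> b)" by (rule rM_comp[OF R_presUM[OF bR], symmetric])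
    finally show ?thesis .
  qed
  moreover have "r1 \<circ> r2 \<in> R" by (rule R_comp[OF r1(1) r2(1)])
  ultimately show "\<exists>r\<in>R. star (rM r) \<circ> rM (a \<circ> b) \<in> Hk" by metis
qed

end



context setting begin

lemma idx_rc: "finite {rc D g | g. g \<in> R} \<and> card {rc D g | g. g \<in> R} \<le> m"
proof -
  have "{D #>\<^bsub>Sym\<^esub> g | g. g \<in> R} = {rc D g | g. g \<in> R}"
  proof -
    have "D #>\<^bsub>Sym\<^esub> g = rc D g" if "g \<in> R" for g
      by (rule rc_Sym[OF sub_bij[OF D_sub] R_bij[OF that]])
    then show ?thesis by blast
  qed
  then show ?thesis using idx by (simp add: index_le_def D_def R_def)
qed

lemma conj_class_eq: assumes "subgroup K Sym" "bij x"
  shows "conj_class K x = {k \<circ> x \<circ> iv k | k. k \<in> K}"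
proof -
  have "k \<otimes>\<^bsub>Sym\<^esub> x \<otimes>\<^bsub>Sym\<^esub> inv\<^bsub>Sym\<^esub> k = k \<circ> x \<circ> iv k" if "k \<in> K" for k
  proof -
    have bk: "bij k" by (rule sub_bij[OF assms(1) that])
    then show ?thesis using assms(2) by (simp add: Sym_mult Sym_inv)
  qed
  then show ?thesis unfolding conj_class_def by force
qed

lemma FC_kill:
  assumes t: "\<tau> \<in> P" and w: "w \<in> Rist G (Om \<tau>)"
    and cm: "\<And>d. d \<in> D \<Longrightarrow> d \<in> Rist G (Om \<tau>) \<Longrightarrow> d \<circ> w = w \<circ> d"
  shows "w = id"
proof -
  let ?F = "Rist G (Om \<tau>)"
  have sF: "subgroup ?F Sym" by (rule Rist_sub)
  have bw: "bij w" by (rule sub_bij[OF sF w])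
  let ?Cs = "{rc D g | g. g \<in> R}"
  define \<phi> where "\<phi> C = (SOME k. k \<in> ?F \<and> rc D k = C)" for C
  define \<psi> where "\<psi> C = iv (\<phi> C) \<circ> w \<circ> \<phi> C" for C
  have sub: "{k \<circ> w \<circ> iv k | k. k \<in> ?F} \<subseteq> \<psi> ` ?Cs"
  proof
    fix y assume "y \<in> {k \<circ> w \<circ> iv k | k. k \<in> ?F}"
    then obtain k where k: "k \<in> ?F" "y = k \<circ> w \<circ> iv k" by blast
    have bk: "bij k" by (rule sub_bij[OF sF k(1)])
    define k' where "k' = iv k"
    have k'F: "k' \<in> ?F" unfolding k'_def by (rule sub_iv[OF sF k(1)])
    have bk': "bij k'" by (rule sub_bij[OF sF k'F])
    define C where "C = rc D k'"
    have CC: "C \<in> ?Cs" unfolding C_def using Fr_R[OF t] k'F by blast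
    have "\<exists>k0. k0 \<in> ?F \<and> rc D k0 = C" using k'F C_def by blast
    then have k0: "\<phi> C \<in> ?F \<and> rc D (\<phi> C) = C" unfolding \<phi>_def by (rule someI_ex)
    define k0 where "k0 = \<phi> C"
    have k0F: "k0 \<in> ?F" and k0C: "rc D k0 = rc D k'" using k0 unfolding k0_def C_def by auto
    have bk0: "bij k0" by (rule sub_bij[OF sF k0F])
    define h where "h = k0 \<circ> iv k'"
    have hD: "h \<in> D" unfolding h_def by (rule rc_eqD[OF D_sub bk0 bk' k0C])
    have hF: "h \<in> ?F" unfolding h_def by (rule sub_comp[OF sF k0F sub_iv[OF sF k'F]])
    have bh: "bij h" by (rule sub_bij[OF sF hF])
    have hw: "h \<circ> w = w \<circ> h" by (rule cm[OF hD hF])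
    have k0eq: "k0 = h \<circ> k'" unfolding h_def using bk' by (simp add: comp_assoc)
    have "\<psi> C = iv k0 \<circ> w \<circ> k0" unfolding \<psi>_def k0_def ..
    also have "... = iv (h \<circ> k') \<circ> w \<circ> (h \<circ> k')" using k0eq by simp
    also have "... = iv k' \<circ> (iv h \<circ> (w \<circ> h)) \<circ> k'" using bh bk' by (simp add: iv_comp comp_assoc)
    also have "iv h \<circ> (w \<circ> h) = w" using hw[symmetric] bh by (simp add: comp_assoc)
    also have "iv k' \<circ> w \<circ> k' = y" unfolding k'_def using k(2) bk by simp
    finally have "\<psi> C = y" .
    then show "y \<in> \<psi> ` ?Cs" using CC by blast
  qed
  have fin: "finite {k \<circ> w \<circ> iv k | k. k \<in> ?F}"
    using finite_subset[OF sub] idx_rc by blast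
  have "card {k \<circ> w \<circ> iv k | k. k \<in> ?F} \<le> card (\<psi> ` ?Cs)"
    using card_mono[OF _ sub] idx_rc by blast
  also have "... \<le> card ?Cs" using card_image_le idx_rc by blast
  also have "... \<le> m" using idx_rc by blast
  finally have cardle: "card {k \<circ> w \<circ> iv k | k. k \<in> ?F} \<le> m" .
  have cce: "conj_class ?F w = {k \<circ> w \<circ> iv k | k. k \<in> ?F}" by (rule conj_class_eq[OF sF bw])
  have "w \<in> FC_le m ?F"
    unfolding FC_le_def using w fin cardle cce by simp
  then have "w \<in> {\<one>\<^bsub>Sym\<^esub>}" using FC[OF t] by blast
  then show ?thesis using Sym_one by simp
qed

lemma noncomm:
  assumes t: "\<tau> \<in> P" and w: "w \<in> Rist G (Om \<tau>)" and wn: "w \<noteq> id"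
  shows "\<exists>d. d \<in> D \<and> d \<in> Rist G (Om \<tau>) \<and> d \<circ> w \<noteq> w \<circ> d"
  using FC_kill[OF t w] wn by blast

lemma D_trivial_if: assumes "Y = {}" shows "D = {id}"
proof -
  have "Gd = {}" unfolding Gd_def using assms by blast
  then have "D = generate Sym {}" unfolding D_gen by simp
  also have "... = {\<one>\<^bsub>Sym\<^esub>}" by (rule group.generate_empty[OF Sym_group])
  finally show ?thesis using Sym_one by simp
qed

end



context setting begin

lemma stepB: "\<exists>\<tau>\<in>MS. \<exists>z. z \<in> Hk \<and> z \<in> Rist G (Om \<tau>) \<and> z \<noteq> id"
proof -
  let ?Fs = "Rist G (Om sg)"
  have idFs: "id \<in> ?Fs" by (rule sub_id[OF Rist_sub])
  have "?Fs \<noteq> {id}" using nontriv[OF sgP] unfolding Sym_one .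
  then obtain w0 where w0: "w0 \<in> ?Fs" "w0 \<noteq> id" using idFs by blast
  obtain d where d: "d \<in> D" "d \<in> ?Fs" "d \<circ> w0 \<noteq> w0 \<circ> d" using noncomm[OF sgP w0] by blast
  have dn: "d \<noteq> id" using d(3) by auto
  have dR: "d \<in> R" using d(1) D_R by blast
  have bd: "bij d" by (rule R_bij[OF dR])
  have fdS: "fixout d (Om sg)" by (rule Rist_fix[OF d(2)])
  have fdUM: "fixout d UM" using fixout_mono[OF fdS Om_UM[OF M1]] .
  have rMd: "rM d = d" by (rule rM_self[OF fdUM])
  obtain r where r: "r \<in> R" "star (rM r) \<circ> rM d \<in> Hk" using stepA[OF d(1)] by blast
  define v where "v = rM r"
  have bv: "bij v" unfolding v_def by (rule rM_bij[OF r(1)])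
  have fv: "fixout v UM" unfolding v_def by (rule rM_fix)
  have hv: "star v \<circ> d \<in> Hk" using r(2) rMd v_def by simp
  show ?thesis
  proof (cases "v = id")
    case True
    then have "d \<in> Hk" using hv star_id by simp
    then show ?thesis using M1 d(2) dn by blast
  next
    case False
    have "Y \<noteq> {}" using D_trivial_if d(1) dn by blast
    then obtain \<gamma> where gY: "\<gamma> \<in> Y" by blast
    have gR: "\<gamma> \<in> R" and sgH: "\<gamma> \<circ> sg \<circ> iv \<gamma> \<in> Hk" using gY Y_iff by blast+
    have bg: "bij \<gamma>" by (rule R_bij[OF gR])
    have pgUM: "pres \<gamma> UM" by (rule R_presUM[OF gR])
    define w where "w = \<gamma> \<circ> v \<circ> iv \<gamma>"
    have bw: "bij w" unfolding w_def using bg bv by simp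
    have wn: "w \<noteq> id"
    proof
      assume "w = id"
      then have "iv \<gamma> \<circ> w \<circ> \<gamma> = id" using bg by simp
      then have "v = id" unfolding w_def using bg by (simp add: comp_assoc)
      then show False using False by simp
    qed
    have fw: "fixout w UM"
    proof -
      have "fixout (\<gamma> \<circ> v \<circ> iv \<gamma>) (\<gamma> ` UM)" by (rule fixout_conj[OF bg fv])
      then show ?thesis unfolding w_def using pres_image[OF bg pgUM] by simp
    qed
    obtain x where x: "w x \<noteq> x" using wn by (auto simp: fun_eq_iff)
    have "x \<in> UM" using x fw by (auto simp: fixout_def)
    then obtain \<tau> where t: "\<tau> \<in> MS" "x \<in> Om \<tau>" by (auto simp: UM_def)
    have tP: "\<tau> \<in> P" using t(1) MS_P by blast
    have OmUM: "Om \<tau> \<subseteq> UM" by (rule Om_UM[OF t(1)])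
    have OmU: "Om \<tau> \<subseteq> U" by (rule Om_U[OF tP])
    let ?Ft = "Rist G (Om \<tau>)"
    have sFt: "subgroup ?Ft Sym" by (rule Rist_sub)
    define wt where "wt = restr w (Om \<tau>)"
    have wtn: "wt \<noteq> id" using x t(2) unfolding wt_def by (auto simp: restr_def fun_eq_iff)
    have pg: "pres \<gamma> (Om \<tau>)" by (rule R_pres[OF gR tP])
    have pig: "pres (iv \<gamma>) (Om \<tau>)" by (rule R_pres[OF R_iv[OF gR] tP])
    have pv: "pres v (Om \<tau>)" unfolding v_def rM_def by (rule restr_pres[OF R_presUM[OF r(1)] R_pres[OF r(1) tP]])
    have pw: "pres w (Om \<tau>)" unfolding w_def by (rule pres_comp[OF pres_comp[OF pg pv] pig])
    have wtF: "wt \<in> ?Ft"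
    proof -
      have "wt = restr (\<gamma> \<circ> v) (Om \<tau>) \<circ> restr (iv \<gamma>) (Om \<tau>)"
        unfolding wt_def w_def by (rule restr_comp[OF pig])
      also have "restr (\<gamma> \<circ> v) (Om \<tau>) = restr \<gamma> (Om \<tau>) \<circ> restr v (Om \<tau>)" by (rule restr_comp[OF pv])
      also have "restr v (Om \<tau>) = restr r (Om \<tau>)" unfolding v_def rM_def by (rule restr_restr[OF OmUM])
      finally have eq: "wt = restr \<gamma> (Om \<tau>) \<circ> restr r (Om \<tau>) \<circ> restr (iv \<gamma>) (Om \<tau>)" .
      have "restr \<gamma> (Om \<tau>) \<circ> restr r (Om \<tau>) \<circ> restr (iv \<gamma>) (Om \<tau>) \<in> ?Ft"
        by (rule sub_comp[OF sFt sub_comp[OF sFt R_restr[OF gR tP] R_restr[OF r(1) tP]] R_restr[OF R_iv[OF gR] tP]])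
      then show ?thesis using eq by simp
    qed
    have bwt: "bij wt" by (rule sub_bij[OF sFt wtF])
    obtain d' where d': "d' \<in> D" "d' \<in> ?Ft" "d' \<circ> wt \<noteq> wt \<circ> d'" using noncomm[OF tP wtF wtn] by blast
    have d'R: "d' \<in> R" using d'(1) D_R by blast
    have bd': "bij d'" by (rule R_bij[OF d'R])
    have fd't: "fixout d' (Om \<tau>)" by (rule Rist_fix[OF d'(2)])
    have fd'UM: "fixout d' UM" by (rule fixout_mono[OF fd't OmUM])
    have fd'U: "fixout d' U" by (rule fixout_mono[OF fd't OmU])
    obtain r' where r': "r' \<in> R" "star (rM r') \<circ> rM d' \<in> Hk" using stepA[OF d'(1)] by blast
    define p where "p = star (rM r')"
    have bp: "bij p" unfolding p_def by (rule star_bij[OF rM_bij[OF r'(1)]])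
    have fp: "fixout p SU" unfolding p_def by (rule star_fix[OF rM_bij[OF r'(1)] rM_fix])
    have hm: "p \<circ> d' \<in> Hk" using r'(2) rM_self[OF fd'UM] p_def by simp
    define sgm where "sgm = \<gamma> \<circ> sg \<circ> iv \<gamma>"
    have bsgm: "bij sgm" unfolding sgm_def using bg sg_bij by simp
    define hp where "hp = sgm \<circ> (star v \<circ> d) \<circ> iv sgm"
    have hpH: "hp \<in> Hk" unfolding hp_def sgm_def
      by (rule sub_comp[OF Hk_sub sub_comp[OF Hk_sub sgH hv] sub_iv[OF Hk_sub sgH]])
    define c where "c = sg \<circ> (iv \<gamma> \<circ> d \<circ> \<gamma>) \<circ> iv sg"
    have bc: "bij c" unfolding c_def using sg_bij bg bd by simp
    have fc: "fixout c SS"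
    proof -
      have pigS: "pres (iv \<gamma>) (Om sg)" by (rule R_pres[OF R_iv[OF gR] sgP])
      have "fixout (iv \<gamma> \<circ> d \<circ> iv (iv \<gamma>)) (iv \<gamma> ` Om sg)" by (rule fixout_conj[OF bij_iv[OF bg] fdS])
      then have f1: "fixout (iv \<gamma> \<circ> d \<circ> \<gamma>) (Om sg)" using pres_image[OF bij_iv[OF bg] pigS] bg by simp
      have "fixout (sg \<circ> (iv \<gamma> \<circ> d \<circ> \<gamma>) \<circ> iv sg) (sg ` Om sg)" by (rule fixout_conj[OF sg_bij f1])
      then show ?thesis unfolding c_def SS_def .
    qed
    have fgU: "fixout \<gamma> U" by (rule R_fix[OF gR])
    have fwU: "fixout w U" by (rule fixout_mono[OF fw UM_U])
    have SSU: "SS \<inter> U = {}" by (rule SS_U)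
    have USS: "U \<inter> SS = {}" using SS_U by blast
    have hp_eq: "hp = w \<circ> c"
    proof -
      have cm1: "iv \<gamma> \<circ> star v = star v \<circ> iv \<gamma>"
        by (rule comm_U_SU[OF bij_iv[OF bg] fixout_iv[OF bg fgU] star_bij[OF bv] star_fix[OF bv fv]])
      have cm2: "c \<circ> iv \<gamma> = iv \<gamma> \<circ> c"
        by (rule fixout_commute[OF bc bij_iv[OF bg] fc fixout_iv[OF bg fgU] SSU])
      have "hp = \<gamma> \<circ> sg \<circ> (iv \<gamma> \<circ> star v) \<circ> d \<circ> \<gamma> \<circ> iv sg \<circ> iv \<gamma>"
        unfolding hp_def sgm_def using bg sg_bij by (simp add: iv_comp comp_assoc)
      also have "... = \<gamma> \<circ> sg \<circ> (star v \<circ> iv \<gamma>) \<circ> d \<circ> \<gamma> \<circ> iv sg \<circ> iv \<gamma>" using cm1 by simp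
      also have "... = \<gamma> \<circ> v \<circ> (c \<circ> iv \<gamma>)" unfolding c_def star_def using sg_bij by (simp add: comp_assoc)
      also have "... = \<gamma> \<circ> v \<circ> (iv \<gamma> \<circ> c)" using cm2 by simp
      also have "... = w \<circ> c" unfolding w_def by (simp add: comp_assoc)
      finally show ?thesis .
    qed
    define z0 where "z0 = (p \<circ> d') \<circ> hp \<circ> iv (p \<circ> d') \<circ> iv hp"
    have z0H: "z0 \<in> Hk" unfolding z0_def
      by (rule sub_comp[OF Hk_sub sub_comp[OF Hk_sub sub_comp[OF Hk_sub hm hpH] sub_iv[OF Hk_sub hm]] sub_iv[OF Hk_sub hpH]])
    have pq: "p \<circ> d' = d' \<circ> p" using comm_U_SU[OF bd' fd'U bp fp] by simp
    have pw': "p \<circ> w = w \<circ> p" using comm_U_SU[OF bw fwU bp fp] by simp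
    have SUSS: "SU \<inter> SS = {}" using SS_SU by blast
    have pc: "p \<circ> c = c \<circ> p" by (rule fixout_commute[OF bp bc fp fc SUSS])
    have cq: "c \<circ> d' = d' \<circ> c" by (rule fixout_commute[OF bc bd' fc fd'U SSU])
    have cw: "c \<circ> w = w \<circ> c" by (rule fixout_commute[OF bc bw fc fwU SSU])
    have z0eq: "z0 = d' \<circ> w \<circ> iv d' \<circ> iv w"
      unfolding z0_def hp_eq by (rule commutator4[OF bp bd' bw bc pq pw' pc cq cw])
    define z where "z = d' \<circ> wt \<circ> iv d' \<circ> iv wt"
    have "w \<circ> iv d' \<circ> iv w = wt \<circ> iv d' \<circ> iv wt"
      unfolding wt_def by (rule conj_restr[OF bw pw fixout_iv[OF bd' fd't] bij_iv[OF bd']])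
    then have zz: "z0 = z" unfolding z0eq z_def by (simp add: comp_assoc)
    have zH: "z \<in> Hk" using z0H zz by simp
    have zF: "z \<in> ?Ft" unfolding z_def
      by (rule sub_comp[OF sFt sub_comp[OF sFt sub_comp[OF sFt d'(2) wtF] sub_iv[OF sFt d'(2)]] sub_iv[OF sFt wtF]])
    have zn: "z \<noteq> id"
    proof
      assume "z = id"
      then have "z \<circ> (wt \<circ> d') = wt \<circ> d'" by simp
      moreover have "z \<circ> (wt \<circ> d') = d' \<circ> wt" unfolding z_def using bd' bwt by (simp add: comp_assoc)
      ultimately show False using d'(3) by simp
    qed
    show ?thesis using t(1) zH zF zn by blast
  qed
qed

end



context setting begin

lemma conjH:
  assumes dD: "d \<in> D"
  shows "\<exists>h\<in>Hk. \<forall>x. bij x \<longrightarrow> fixout x UM \<longrightarrow> h \<circ> x \<circ> iv h = d \<circ> x \<circ> iv d"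
proof -
  obtain r where r: "r \<in> R" "star (rM r) \<circ> rM d \<in> Hk" using stepA[OF dD] by blast
  have dR: "d \<in> R" using dD D_R by blast
  have bd: "bij d" by (rule R_bij[OF dR])
  define v where "v = rM r"
  have bv: "bij v" unfolding v_def by (rule rM_bij[OF r(1)])
  have fv: "fixout v UM" unfolding v_def by (rule rM_fix)
  have bsv: "bij (star v)" by (rule star_bij[OF bv])
  have fsv: "fixout (star v) SU" by (rule star_fix[OF bv fv])
  have bdM: "bij (rM d)" by (rule rM_bij[OF dR])
  have pdM: "pres (rM d) UM" by (rule rM_pres[OF dR])
  have "star v \<circ> rM d \<circ> x \<circ> iv (star v \<circ> rM d) = d \<circ> x \<circ> iv d" if bx: "bij x" and fx: "fixout x UM" for x
  proof -
    define y where "y = rM d \<circ> x \<circ> iv (rM d)"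
    have by': "bij y" unfolding y_def using bdM bx by simp
    have "fixout y (rM d ` UM)" unfolding y_def by (rule fixout_conj[OF bdM fx])
    then have fy: "fixout y UM" using pres_image[OF bdM pdM] by simp
    have fyU: "fixout y U" by (rule fixout_mono[OF fy UM_U])
    have c: "y \<circ> star v = star v \<circ> y" by (rule comm_U_SU[OF by' fyU bsv fsv])
    have "star v \<circ> rM d \<circ> x \<circ> iv (star v \<circ> rM d) = star v \<circ> y \<circ> iv (star v)"
      unfolding y_def using bsv bdM by (simp add: iv_comp comp_assoc)
    also have "... = y" by (rule conj_comm[OF bsv c[symmetric]])
    also have "y = d \<circ> x \<circ> iv d" unfolding y_def rM_def
      by (rule conj_restr[OF bd R_presUM[OF dR] fx bx, symmetric])
    finally show ?thesis .
  qed
  then show ?thesis using r(2) v_def by blast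
qed

lemma main_loc:
  "\<exists>\<rho> \<in> Mset P Om sg. \<exists>N. subgroup N Sym \<and> N \<subseteq> Hk \<and> N \<noteq> {\<one>\<^bsub>Sym\<^esub>} \<and>
           N \<subseteq> Rist G (Om \<rho>) \<and> normalizes (Dgrp (Rgrp G P Om) sg Hk) N \<and>
           ((\<forall>\<rho>' \<in> Mset P Om sg. fin_gen (Rist G (Om \<rho>'))) \<longrightarrow>
              (\<exists>L. subgroup L Sym \<and> fin_gen L \<and> N \<subseteq> L \<and> L \<subseteq> Hk))"
proof -
  obtain \<tau> z where t: "\<tau> \<in> MS" and zH: "z \<in> Hk" and zF: "z \<in> Rist G (Om \<tau>)" and zn: "z \<noteq> id"
    using stepB by blast
  have tP: "\<tau> \<in> P" using t MS_P by blast
  let ?Ft = "Rist G (Om \<tau>)"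
  have sFt: "subgroup ?Ft Sym" by (rule Rist_sub)
  have OmUM: "Om \<tau> \<subseteq> UM" by (rule Om_UM[OF t])
  have bz: "bij z" by (rule sub_bij[OF sFt zF])
  have fz: "fixout z (Om \<tau>)" by (rule Rist_fix[OF zF])
  have fzUM: "fixout z UM" by (rule fixout_mono[OF fz OmUM])
  define Cz where "Cz = {d \<circ> z \<circ> iv d | d. d \<in> D}"
  define N where "N = generate Sym Cz"
  have CzHF: "c \<in> Hk \<and> c \<in> ?Ft" if cC: "c \<in> Cz" for c
  proof -
    obtain d where d: "d \<in> D" "c = d \<circ> z \<circ> iv d" using cC Cz_def by blast
    have dR: "d \<in> R" using d(1) D_R by blast
    have bd: "bij d" by (rule R_bij[OF dR])
    obtain h where h: "h \<in> Hk" "\<forall>x. bij x \<longrightarrow> fixout x UM \<longrightarrow> h \<circ> x \<circ> iv h = d \<circ> x \<circ> iv d"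
      using conjH[OF d(1)] by blast
    have "h \<circ> z \<circ> iv h = c" using h(2) bz fzUM d(2) by simp
    moreover have "h \<circ> z \<circ> iv h \<in> Hk" by (rule sub_comp[OF Hk_sub sub_comp[OF Hk_sub h(1) zH] sub_iv[OF Hk_sub h(1)]])
    ultimately have cH: "c \<in> Hk" by simp
    have "c \<in> G" unfolding d(2) by (rule G_comp[OF G_comp[OF R_G[OF dR] Rist_G[OF zF]] G_iv[OF R_G[OF dR]]])
    moreover have "fixout (d \<circ> z \<circ> iv d) (d ` Om \<tau>)" by (rule fixout_conj[OF bd fz])
    then have "fixout c (Om \<tau>)" using d(2) pres_image[OF bd R_pres[OF dR tP]] by simp
    ultimately have "c \<in> ?Ft" by (rule Rist_I)
    then show ?thesis using cH by simp
  qed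
  have bCz: "bij c" if "c \<in> Cz" for c using CzHF[OF that] sub_bij[OF Hk_sub] by blast
  have sN: "subgroup N Sym" unfolding N_def by (rule gen_sub[OF bCz])
  have NH: "N \<subseteq> Hk" unfolding N_def by (rule gen_min[OF Hk_sub]) (use CzHF in blast)
  have NF: "N \<subseteq> ?Ft" unfolding N_def by (rule gen_min[OF sFt]) (use CzHF in blast)
  have zCz: "z \<in> Cz"
  proof -
    have "id \<circ> z \<circ> iv id \<in> Cz" unfolding Cz_def using sub_id[OF D_sub] by blast
    then show ?thesis by simp
  qed
  have zN: "z \<in> N" unfolding N_def by (rule gen_incl[OF zCz])
  have Nn: "N \<noteq> {\<one>\<^bsub>Sym\<^esub>}" using zN zn unfolding Sym_one by blast
  have norm: "normalizes D N"
    unfolding normalizes_def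
  proof
    fix d assume dD: "d \<in> D"
    have bd: "bij d" using dD D_R R_bij by blast
    have "conjg d N = {d \<circ> h \<circ> iv d | h. h \<in> N}"
    proof -
      have "d \<otimes>\<^bsub>Sym\<^esub> h \<otimes>\<^bsub>Sym\<^esub> inv\<^bsub>Sym\<^esub> d = d \<circ> h \<circ> iv d" if "h \<in> N" for h
        using bd sub_bij[OF sN that] by (simp add: Sym_mult Sym_inv)
      then show ?thesis unfolding conjg_def by force
    qed
    also have "... = generate Sym {d \<circ> c \<circ> iv d | c. c \<in> Cz}" unfolding N_def by (rule gen_conj[OF bd bCz])
    also have "{d \<circ> c \<circ> iv d | c. c \<in> Cz} = Cz"
    proof (intro Set.set_eqI iffI)
      fix y assume "y \<in> {d \<circ> c \<circ> iv d | c. c \<in> Cz}"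
      then obtain e where e: "e \<in> D" "y = d \<circ> (e \<circ> z \<circ> iv e) \<circ> iv d" unfolding Cz_def by blast
      have be: "bij e" using e(1) D_R R_bij by blast
      have "y = (d \<circ> e) \<circ> z \<circ> iv (d \<circ> e)" using e(2) bd be by (simp add: iv_comp comp_assoc)
      moreover have "d \<circ> e \<in> D" by (rule sub_comp[OF D_sub dD e(1)])
      ultimately show "y \<in> Cz" unfolding Cz_def by blast
    next
      fix y assume "y \<in> Cz"
      then obtain e where e: "e \<in> D" "y = e \<circ> z \<circ> iv e" unfolding Cz_def by blast
      have be: "bij e" using e(1) D_R R_bij by blast
      have ideD: "iv d \<circ> e \<in> D" by (rule sub_comp[OF D_sub sub_iv[OF D_sub dD] e(1)])
      have "y = d \<circ> ((iv d \<circ> e) \<circ> z \<circ> iv (iv d \<circ> e)) \<circ> iv d" using e(2) bd be by (simp add: iv_comp comp_assoc)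
      moreover have "(iv d \<circ> e) \<circ> z \<circ> iv (iv d \<circ> e) \<in> Cz" unfolding Cz_def using ideD by blast
      ultimately show "y \<in> {d \<circ> c \<circ> iv d | c. c \<in> Cz}" by blast
    qed
    finally show "conjg d N = N" unfolding N_def .
  qed
  have fg: "\<exists>L. subgroup L Sym \<and> fin_gen L \<and> N \<subseteq> L \<and> L \<subseteq> Hk"
    if allfg: "\<forall>\<rho>' \<in> Mset P Om sg. fin_gen (Rist G (Om \<rho>'))"
  proof -
    have "fin_gen ?Ft" using allfg t MS_def by blast
    then obtain Fg where Fg: "finite Fg" "Fg \<subseteq> carrier Sym" "generate Sym Fg = ?Ft"
      unfolding fin_gen_def by blast
    have bFg: "bij x" if "x \<in> Fg" for x using Fg(2) that Sym_carrier by blast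
    define Pi where "Pi = (\<lambda>d. restr d (Om \<tau>)) ` D"
    have PiF: "Pi \<subseteq> ?Ft"
    proof
      fix y assume "y \<in> Pi"
      then obtain d where d: "d \<in> D" "y = restr d (Om \<tau>)" unfolding Pi_def by blast
      have "d \<in> R" using d(1) D_R by blast
      then show "y \<in> ?Ft" using d(2) R_restr[OF _ tP] by simp
    qed
    have sPi: "subgroup Pi Sym"
    proof (rule sub_I)
      show "bij x" if "x \<in> Pi" for x using that PiF sub_bij[OF sFt] by blast
      have "restr id (Om \<tau>) \<in> Pi" unfolding Pi_def using sub_id[OF D_sub] by blast
      then show "id \<in> Pi" by (simp add: restr_id)
      show "x \<circ> y \<in> Pi" if xy: "x \<in> Pi" "y \<in> Pi" for x y
      proof -
        obtain a where a: "a \<in> D" "x = restr a (Om \<tau>)" using xy(1) Pi_def by blast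
        obtain b where b: "b \<in> D" "y = restr b (Om \<tau>)" using xy(2) Pi_def by blast
        have pb: "pres b (Om \<tau>)" using b(1) D_R R_pres[OF _ tP] by blast
        have "x \<circ> y = restr (a \<circ> b) (Om \<tau>)" using a(2) b(2) restr_comp[OF pb] by simp
        moreover have "a \<circ> b \<in> D" by (rule sub_comp[OF D_sub a(1) b(1)])
        ultimately show ?thesis unfolding Pi_def by blast
      qed
      show "iv x \<in> Pi" if xP: "x \<in> Pi" for x
      proof -
        obtain a where a: "a \<in> D" "x = restr a (Om \<tau>)" using xP Pi_def by blast
        have aR: "a \<in> R" using a(1) D_R by blast
        have "iv x = restr (iv a) (Om \<tau>)" using a(2) restr_iv[OF R_bij[OF aR] R_pres[OF aR tP]] by simp
        moreover have "iv a \<in> D" by (rule sub_iv[OF D_sub a(1)])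
        ultimately show ?thesis unfolding Pi_def by blast
      qed
    qed
    have finPi: "finite {rc Pi g | g. g \<in> generate Sym Fg}"
    proof -
      define \<xi> where "\<xi> C = rc Pi (SOME g. g \<in> ?Ft \<and> rc D g = C)" for C
      have "{rc Pi g | g. g \<in> generate Sym Fg} \<subseteq> \<xi> ` {rc D g | g. g \<in> R}"
      proof
        fix Q assume "Q \<in> {rc Pi g | g. g \<in> generate Sym Fg}"
        then obtain g where g: "g \<in> ?Ft" "Q = rc Pi g" using Fg(3) by blast
        have gR: "g \<in> R" using g(1) Fr_R[OF tP] by blast
        have bg: "bij g" by (rule R_bij[OF gR])
        have "\<exists>g0. g0 \<in> ?Ft \<and> rc D g0 = rc D g" using g(1) by blast
        then have g0: "(SOME g0. g0 \<in> ?Ft \<and> rc D g0 = rc D g) \<in> ?Ft \<and> rc D (SOME g0. g0 \<in> ?Ft \<and> rc D g0 = rc D g) = rc D g"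
          by (rule someI_ex)
        define g0 where "g0 = (SOME g0. g0 \<in> ?Ft \<and> rc D g0 = rc D g)"
        have g0F: "g0 \<in> ?Ft" and g0C: "rc D g0 = rc D g" using g0 g0_def by auto
        have bg0: "bij g0" by (rule sub_bij[OF sFt g0F])
        define h where "h = g0 \<circ> iv g"
        have hD: "h \<in> D" unfolding h_def by (rule rc_eqD[OF D_sub bg0 bg g0C])
        have hF: "h \<in> ?Ft" unfolding h_def by (rule sub_comp[OF sFt g0F sub_iv[OF sFt g(1)]])
        have "restr h (Om \<tau>) = h" by (rule restr_of_fixout[OF Rist_fix[OF hF]])
        then have hPi: "h \<in> Pi" unfolding Pi_def using hD by (intro image_eqI[where x=h]) simp_all
        have "g0 = h \<circ> g" unfolding h_def using bg by (simp add: comp_assoc)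
        then have "rc Pi g0 = rc Pi g" using rc_eqI[OF sPi hPi] by simp
        then have "\<xi> (rc D g) = Q" unfolding \<xi>_def g0_def[symmetric] using g(2) by simp
        moreover have "rc D g \<in> {rc D g | g. g \<in> R}" using gR by blast
        ultimately show "Q \<in> \<xi> ` {rc D g | g. g \<in> R}" by blast
      qed
      then show ?thesis by (rule finite_subset[OF _ finite_imageI[OF conjunct1[OF idx_rc]]])
    qed
    have PiFg: "Pi \<subseteq> generate Sym Fg" using PiF Fg(3) by simp
    obtain F' where F': "finite F'" "\<forall>x\<in>F'. bij x" "generate Sym F' = Pi"
      using schreier[OF Fg(1) bFg sPi PiFg finPi] by blast
    have bF': "bij x" if "x \<in> F'" for x using F'(2) that by blast
    define gsel where "gsel y = (SOME g. g \<in> D \<and> restr g (Om \<tau>) = y)" for y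
    define hsel where "hsel y = (SOME h. h \<in> Hk \<and> (\<forall>x. bij x \<longrightarrow> fixout x UM \<longrightarrow> h \<circ> x \<circ> iv h = gsel y \<circ> x \<circ> iv (gsel y)))" for y
    have Hy: "hsel y \<in> Hk \<and> (\<forall>x. bij x \<longrightarrow> fixout x (Om \<tau>) \<longrightarrow> hsel y \<circ> x \<circ> iv (hsel y) = y \<circ> x \<circ> iv y)"
      if yF: "y \<in> F'" for y
    proof -
      have "y \<in> Pi" using yF F'(3) gen_incl by blast
      then have "\<exists>g. g \<in> D \<and> restr g (Om \<tau>) = y" unfolding Pi_def by blast
      then have gs: "gsel y \<in> D \<and> restr (gsel y) (Om \<tau>) = y" unfolding gsel_def by (rule someI_ex)
      have "\<exists>h. h \<in> Hk \<and> (\<forall>x. bij x \<longrightarrow> fixout x UM \<longrightarrow> h \<circ> x \<circ> iv h = gsel y \<circ> x \<circ> iv (gsel y))"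
        using conjH[OF conjunct1[OF gs]] by blast
      then have hs: "hsel y \<in> Hk \<and> (\<forall>x. bij x \<longrightarrow> fixout x UM \<longrightarrow> hsel y \<circ> x \<circ> iv (hsel y) = gsel y \<circ> x \<circ> iv (gsel y))"
        unfolding hsel_def by (rule someI_ex)
      have gR: "gsel y \<in> R" using gs D_R by blast
      have "hsel y \<circ> x \<circ> iv (hsel y) = y \<circ> x \<circ> iv y" if bx: "bij x" and fx: "fixout x (Om \<tau>)" for x
      proof -
        have "fixout x UM" by (rule fixout_mono[OF fx OmUM])
        then have "hsel y \<circ> x \<circ> iv (hsel y) = gsel y \<circ> x \<circ> iv (gsel y)" using hs bx by blast
        also have "... = restr (gsel y) (Om \<tau>) \<circ> x \<circ> iv (restr (gsel y) (Om \<tau>))"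
          by (rule conj_restr[OF R_bij[OF gR] R_pres[OF gR tP] fx bx])
        finally show ?thesis using gs by simp
      qed
      then show ?thesis using hs by blast
    qed
    define L where "L = generate Sym ({z} \<union> hsel ` F')"
    have bLg: "bij x" if xx: "x \<in> {z} \<union> hsel ` F'" for x
    proof (cases "x = z")
      case True then show ?thesis using bz by simp
    next
      case False
      then obtain y where y: "y \<in> F'" "x = hsel y" using xx by blast
      have "hsel y \<in> Hk" using conjunct1[OF Hy[OF y(1)]] .
      then show ?thesis using y(2) sub_bij[OF Hk_sub] by simp
    qed
    have sL: "subgroup L Sym" unfolding L_def by (rule gen_sub[OF bLg])
    have fgL: "fin_gen L" unfolding fin_gen_def L_def
    proof (intro exI conjI)
      show "finite ({z} \<union> hsel ` F')" using F'(1) by simp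
      show "{z} \<union> hsel ` F' \<subseteq> carrier Sym" using bLg Sym_carrier by blast
    qed (rule refl)
    have LH: "L \<subseteq> Hk" unfolding L_def
    proof (rule gen_min[OF Hk_sub])
      show "{z} \<union> hsel ` F' \<subseteq> Hk"
      proof
        fix x assume xx: "x \<in> {z} \<union> hsel ` F'"
        show "x \<in> Hk"
        proof (cases "x = z")
          case True then show ?thesis using zH by simp
        next
          case False
          then obtain y where y: "y \<in> F'" "x = hsel y" using xx by blast
          show ?thesis using conjunct1[OF Hy[OF y(1)]] y(2) by simp
        qed
      qed
    qed
    have bL: "bij x" if "x \<in> L" for x by (rule sub_bij[OF sL that])
    have PiFix: "bij y \<and> fixout y (Om \<tau>) \<and> pres y (Om \<tau>)" if "y \<in> Pi" for y
    proof -
      have yF: "y \<in> ?Ft" using that PiF by blast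
      have "bij y" by (rule sub_bij[OF sFt yF])
      moreover have "fixout y (Om \<tau>)" by (rule Rist_fix[OF yF])
      ultimately show ?thesis using fixout_pres by blast
    qed
    have W: "\<exists>W\<in>L. \<forall>x. bij x \<longrightarrow> fixout x (Om \<tau>) \<longrightarrow> W \<circ> x \<circ> iv W = y \<circ> x \<circ> iv y"
      if yP: "y \<in> generate Sym F'" for y
    proof (rule gen_induct[OF yP bF', where P = "\<lambda>y. \<exists>W\<in>L. \<forall>x. bij x \<longrightarrow> fixout x (Om \<tau>) \<longrightarrow> W \<circ> x \<circ> iv W = y \<circ> x \<circ> iv y"])
      show "\<exists>W\<in>L. \<forall>x. bij x \<longrightarrow> fixout x (Om \<tau>) \<longrightarrow> W \<circ> x \<circ> iv W = id \<circ> x \<circ> iv id"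
        using sub_id[OF sL] by (intro bexI[where x=id]) simp_all
    next
      fix h assume hF: "h \<in> F'"
      have "hsel h \<in> L" unfolding L_def using hF by (intro gen_incl) blast
      then show "\<exists>W\<in>L. \<forall>x. bij x \<longrightarrow> fixout x (Om \<tau>) \<longrightarrow> W \<circ> x \<circ> iv W = h \<circ> x \<circ> iv h"
        using Hy[OF hF] by blast
    next
      fix h assume hF: "h \<in> F'"
      have hL: "hsel h \<in> L" unfolding L_def using hF by (intro gen_incl) blast
      have ivL: "iv (hsel h) \<in> L" by (rule sub_iv[OF sL hL])
      have bh: "bij h" by (rule bF'[OF hF])
      have bH: "bij (hsel h)" by (rule bL[OF hL])
      have hPi: "h \<in> Pi" using hF F'(3) gen_incl by blast
      have ph: "pres h (Om \<tau>)" using PiFix[OF hPi] by blast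
      have "iv (hsel h) \<circ> x \<circ> iv (iv (hsel h)) = iv h \<circ> x \<circ> iv (iv h)"
        if bx: "bij x" and fx: "fixout x (Om \<tau>)" for x
      proof -
        define x' where "x' = iv h \<circ> x \<circ> iv (iv h)"
        have bx': "bij x'" unfolding x'_def using bx bh by simp
        have "fixout x' (iv h ` Om \<tau>)" unfolding x'_def by (rule fixout_conj[OF bij_iv[OF bh] fx])
        then have fx': "fixout x' (Om \<tau>)" using pres_image[OF bij_iv[OF bh] pres_iv[OF bh ph]] by simp
        have "hsel h \<circ> x' \<circ> iv (hsel h) = h \<circ> x' \<circ> iv h" using Hy[OF hF] bx' fx' by blast
        also have "... = x" unfolding x'_def using bh by (simp add: comp_assoc)
        finally have e: "hsel h \<circ> x' \<circ> iv (hsel h) = x" .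
        have "iv (hsel h) \<circ> x \<circ> hsel h = x'"
          unfolding e[symmetric] using bH by (simp add: comp_assoc)
        then show ?thesis using bH bh x'_def by simp
      qed
      then show "\<exists>W\<in>L. \<forall>x. bij x \<longrightarrow> fixout x (Om \<tau>) \<longrightarrow> W \<circ> x \<circ> iv W = iv h \<circ> x \<circ> iv (iv h)"
        using ivL by blast
    next
      fix a b assume aP: "a \<in> generate Sym F'" and bP: "b \<in> generate Sym F'"
        and IHa: "\<exists>W\<in>L. \<forall>x. bij x \<longrightarrow> fixout x (Om \<tau>) \<longrightarrow> W \<circ> x \<circ> iv W = a \<circ> x \<circ> iv a"
        and IHb: "\<exists>W\<in>L. \<forall>x. bij x \<longrightarrow> fixout x (Om \<tau>) \<longrightarrow> W \<circ> x \<circ> iv W = b \<circ> x \<circ> iv b"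
      obtain Wa where Wa: "Wa \<in> L" "\<forall>x. bij x \<longrightarrow> fixout x (Om \<tau>) \<longrightarrow> Wa \<circ> x \<circ> iv Wa = a \<circ> x \<circ> iv a"
        using IHa by blast
      obtain Wb where Wb: "Wb \<in> L" "\<forall>x. bij x \<longrightarrow> fixout x (Om \<tau>) \<longrightarrow> Wb \<circ> x \<circ> iv Wb = b \<circ> x \<circ> iv b"
        using IHb by blast
      have aPi: "a \<in> Pi" using aP F'(3) by simp
      have bPi: "b \<in> Pi" using bP F'(3) by simp
      have ba: "bij a" and bb: "bij b" and fb: "fixout b (Om \<tau>)" and pb: "pres b (Om \<tau>)"
        using PiFix[OF aPi] PiFix[OF bPi] by blast+
      have bWa: "bij Wa" by (rule bL[OF Wa(1)])
      have bWb: "bij Wb" by (rule bL[OF Wb(1)])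
      have "(Wa \<circ> Wb) \<circ> x \<circ> iv (Wa \<circ> Wb) = (a \<circ> b) \<circ> x \<circ> iv (a \<circ> b)"
        if bx: "bij x" and fx: "fixout x (Om \<tau>)" for x
      proof -
        define x' where "x' = b \<circ> x \<circ> iv b"
        have bx': "bij x'" unfolding x'_def using bx bb by simp
        have "fixout x' (b ` Om \<tau>)" unfolding x'_def by (rule fixout_conj[OF bb fx])
        then have fx': "fixout x' (Om \<tau>)" using pres_image[OF bb pb] by simp
        have "(Wa \<circ> Wb) \<circ> x \<circ> iv (Wa \<circ> Wb) = Wa \<circ> (Wb \<circ> x \<circ> iv Wb) \<circ> iv Wa"
          using bWa bWb by (simp add: iv_comp comp_assoc)
        also have "Wb \<circ> x \<circ> iv Wb = x'" unfolding x'_def using Wb(2) bx fx by blast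
        also have "Wa \<circ> x' \<circ> iv Wa = a \<circ> x' \<circ> iv a" using Wa(2) bx' fx' by blast
        finally have eq: "(Wa \<circ> Wb) \<circ> x \<circ> iv (Wa \<circ> Wb) = a \<circ> x' \<circ> iv a" .
        have "(a \<circ> b) \<circ> x \<circ> iv (a \<circ> b) = a \<circ> x' \<circ> iv a"
          unfolding x'_def using ba bb by (simp add: iv_comp comp_assoc)
        then show ?thesis using eq by simp
      qed
      moreover have "Wa \<circ> Wb \<in> L" by (rule sub_comp[OF sL Wa(1) Wb(1)])
      ultimately show "\<exists>W\<in>L. \<forall>x. bij x \<longrightarrow> fixout x (Om \<tau>) \<longrightarrow> W \<circ> x \<circ> iv W = (a \<circ> b) \<circ> x \<circ> iv (a \<circ> b)"
        by blast
    qed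
    have zL: "z \<in> L" unfolding L_def by (intro gen_incl) blast
    have "Cz \<subseteq> L"
    proof
      fix c assume "c \<in> Cz"
      then obtain d where d: "d \<in> D" "c = d \<circ> z \<circ> iv d" unfolding Cz_def by blast
      have dR: "d \<in> R" using d(1) D_R by blast
      define y where "y = restr d (Om \<tau>)"
      have "y \<in> Pi" unfolding y_def Pi_def using d(1) by blast
      then have "y \<in> generate Sym F'" using F'(3) by simp
      then obtain Wy where Wy: "Wy \<in> L" "\<forall>x. bij x \<longrightarrow> fixout x (Om \<tau>) \<longrightarrow> Wy \<circ> x \<circ> iv Wy = y \<circ> x \<circ> iv y"
        using W by blast
      have "c = y \<circ> z \<circ> iv y" unfolding d(2) y_def
        by (rule conj_restr[OF R_bij[OF dR] R_pres[OF dR tP] fz bz])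
      also have "... = Wy \<circ> z \<circ> iv Wy" using Wy(2) bz fz by simp
      finally have "c = Wy \<circ> z \<circ> iv Wy" .
      moreover have "Wy \<circ> z \<circ> iv Wy \<in> L" by (rule sub_comp[OF sL sub_comp[OF sL Wy(1) zL] sub_iv[OF sL Wy(1)]])
      ultimately show "c \<in> L" by simp
    qed
    then have NL: "N \<subseteq> L" unfolding N_def by (rule gen_min[OF sL])
    show ?thesis using sL fgL NL LH by blast
  qed
  show ?thesis
    using t sN NH Nn NF norm fg unfolding MS_def D_def R_def by blast
qed

end


theorem proposition3p18:
  fixes n :: nat and H :: "nat \<Rightarrow> ('a \<Rightarrow> 'a) set" and G P :: "('a \<Rightarrow> 'a) set"
    and Om :: "('a \<Rightarrow> 'a) \<Rightarrow> 'a set" and \<sigma> :: "'a \<Rightarrow> 'a" and k :: nat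
  assumes "n \<ge> 1"
    and "\<And>j. j \<in> {1..n} \<Longrightarrow> subgroup (H j) Sym"
    and "subgroup G Sym"
    and "confined_by n H G"
    and "confining_subset n H G P"
    and "displacement_configuration P Om"
    and "\<And>\<tau>. \<tau> \<in> P \<Longrightarrow> Rist G (Om \<tau>) \<noteq> {\<one>\<^bsub>Sym\<^esub>}"
    and "\<And>\<tau>. \<tau> \<in> P \<Longrightarrow> FC_le (n * card P) (Rist G (Om \<tau>)) = {\<one>\<^bsub>Sym\<^esub>}"
    and "\<sigma> \<in> P" and "k \<in> {1..n}"
    and "index_le (Dgrp (Rgrp G P Om) \<sigma> (H k)) (Rgrp G P Om) (n * card P)"
  shows "\<exists>\<rho> \<in> Mset P Om \<sigma>. \<exists>N. subgroup N Sym \<and> N \<subseteq> H k \<and> N \<noteq> {\<one>\<^bsub>Sym\<^esub>} \<and>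
           N \<subseteq> Rist G (Om \<rho>) \<and> normalizes (Dgrp (Rgrp G P Om) \<sigma> (H k)) N \<and>
           ((\<forall>\<rho>' \<in> Mset P Om \<sigma>. fin_gen (Rist G (Om \<rho>'))) \<longrightarrow>
              (\<exists>L. subgroup L Sym \<and> fin_gen L \<and> N \<subseteq> L \<and> L \<subseteq> H k))"
proof -
  have Hk: "subgroup (H k) Sym" using assms(2) assms(10) by blast
  have Pb: "P \<subseteq> carrier Sym" using assms(5) by (simp add: confining_subset_def)
  interpret setting G P Om \<sigma> "H k" "n * card P"
    using Hk assms(3) Pb assms(6) assms(7) assms(8) assms(9) assms(11) by (rule setting.intro)
  show ?thesis by (rule main_loc)
qed

end
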